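(* Let $G^p_n$ be a random bipartite graph drawn from $G(n,n,p)$, and let $i_t(G^p_n)$ be the number of independent sets of size $t$ in $G^p_n$ ($0\le t\le n$). Say an event holds almost surely if its probability tends to $1$ as $n\to\infty$. \begin{enumerate} \item Fix $\delta>0$ and let $p$ satisfy $p\ge \delta$. Then almost surely the sequence $(i_t(G^p_n))_{t\ge 0}$ is unimodal with mode $n/2$. Moreover, there is a constant $C=C(p)$ such that almost surely the sequence $(i_t(G^p_n))_{t=[C\log n]}^{n}$ is log-concave. \item There are constants $C,D$ such that if $p\ge D n^{-1/2}\log^{1/2} n$ then almost surely the sequence $(i_t(G^p_n))_{t=[(C\log n)/p]}^{n}$ is unimodal with mode $n/2$, and moreover is log-concave. \item If $p\ge (\log n+\log\log n+\omega(1))/n$ then almost surely the sequence $(i_t(G^p_n))_{t=0}^{k}$ is increasing, where $k=\log n-2\log\log n$. \end{enumerate}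
   Context: $G(n,n,p)$ is the probability distribution on bipartite graphs with a fixed bipartition $\mathcal{E}\cup\mathcal{O}$, $|\mathcal{E}|=|\mathcal{O}|=n$, in which each of the $n^2$ pairs in $\mathcal{E}\times\mathcal{O}$ is an edge independently with probability $p$ (where $p=p(n)$ may depend on $n$). An independent set is a set of vertices spanning no edge. A sequence $(a_t)_{t=m}^{n}$ is unimodal with mode $k$ if $a_m\le a_{m+1}\le\dots\le a_k\ge a_{k+1}\ge\dots\ge a_n$; it is log-concave if $a_k^2\ge a_{k-1}a_{k+1}$ for all $m<k<n$. $[y]$ denotes the integer part of $y$; $\omega(1)$ denotes a function tending to infinity with $n$. *)

theory Defs
  imports Complex_Main
begin

text \<open>Vertices of the bipartite graph: the even class is \<open>Inl ` {..<n}\<close>,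
  the odd class is \<open>Inr ` {..<n}\<close>.  A bipartite graph on this bipartition
  is given by its edge set \<open>E \<subseteq> {..<n} \<times> {..<n}\<close>, where \<open>(i,j) \<in> E\<close>
  means that \<open>Inl i\<close> and \<open>Inr j\<close> are adjacent.\<close>

definition bip_vertices :: "nat \<Rightarrow> (nat + nat) set" where
  "bip_vertices n = Inl ` {..<n} \<union> Inr ` {..<n}"

definition bip_independent :: "nat \<Rightarrow> (nat \<times> nat) set \<Rightarrow> (nat + nat) set \<Rightarrow> bool" where
  "bip_independent n E S \<longleftrightarrow> S \<subseteq> bip_vertices n \<and>
     (\<forall>i j. (i, j) \<in> E \<longrightarrow> \<not> (Inl i \<in> S \<and> Inr j \<in> S))"

definition indep_count :: "nat \<Rightarrow> (nat \<times> nat) set \<Rightarrow> nat \<Rightarrow> nat" where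
  "indep_count n E t = card {S. bip_independent n E S \<and> card S = t}"

definition prob_Gnnp :: "nat \<Rightarrow> real \<Rightarrow> ((nat \<times> nat) set \<Rightarrow> bool) \<Rightarrow> real" where
  "prob_Gnnp n p P =
     (\<Sum>E \<in> {E. E \<subseteq> {..<n} \<times> {..<n} \<and> P E}.
        p ^ card E * (1 - p) ^ (n * n - card E))"

definition almost_surely :: "(nat \<Rightarrow> real) \<Rightarrow> (nat \<Rightarrow> (nat \<times> nat) set \<Rightarrow> bool) \<Rightarrow> bool" where
  "almost_surely p P \<longleftrightarrow> (\<lambda>n. prob_Gnnp n (p n) (P n)) \<longlonglongrightarrow> 1"

definition unimodal_mode :: "(nat \<Rightarrow> nat) \<Rightarrow> nat \<Rightarrow> nat \<Rightarrow> nat \<Rightarrow> bool" where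
  "unimodal_mode a m N k \<longleftrightarrow> m \<le> k \<and> k \<le> N \<and>
     (\<forall>t. m \<le> t \<and> t < k \<longrightarrow> a t \<le> a (Suc t)) \<and>
     (\<forall>t. k \<le> t \<and> t < N \<longrightarrow> a (Suc t) \<le> a t)"

text \<open>Unimodal with mode n/2 (for odd n: mode \<lfloor>n/2\<rfloor> or \<lceil>n/2\<rceil>).\<close>
definition unimodal_half :: "(nat \<Rightarrow> nat) \<Rightarrow> nat \<Rightarrow> nat \<Rightarrow> bool" where
  "unimodal_half a m n \<longleftrightarrow> unimodal_mode a m n (n div 2) \<or> unimodal_mode a m n ((n + 1) div 2)"

definition log_concave_on :: "(nat \<Rightarrow> nat) \<Rightarrow> nat \<Rightarrow> nat \<Rightarrow> bool" where
  "log_concave_on a m N \<longleftrightarrow> (\<forall>k. m < k \<and> k < N \<longrightarrow> a (k - 1) * a (k + 1) \<le> (a k)\<^sup>2)"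

end

theory Submission
  imports Defs "HOL-Real_Asymp.Real_Asymp"
begin


lemma binsum:
  fixes x y :: real
  assumes "finite B"
  shows "(\<Sum>E\<in>Pow B. x ^ card E * y ^ (card B - card E)) = (x + y) ^ card B"
  using assms
proof (induction B rule: finite_induct)
  case empty then show ?case by simp
next
  case (insert a B)
  have fin: "finite (Pow B)" using insert by simp
  have Pi: "Pow (insert a B) = Pow B \<union> insert a ` Pow B" by (rule Pow_insert)
  have disj: "Pow B \<inter> insert a ` Pow B = {}" using insert by auto
  have inj: "inj_on (insert a) (Pow B)" using insert
    unfolding inj_on_def by (metis PowD insert_Diff_if insert_Diff1 singletonI subset_iff Diff_insert_absorb)
  have cE: "\<And>E. E \<subseteq> B \<Longrightarrow> card (insert a E) = Suc (card E)"
    using insert by (meson card_insert_disjoint finite_subset subset_iff)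
  have cle: "\<And>E. E \<subseteq> B \<Longrightarrow> card E \<le> card B"
    using insert by (simp add: card_mono)
  have "(\<Sum>E\<in>Pow (insert a B). x ^ card E * y ^ (card (insert a B) - card E))
     = (\<Sum>E\<in>Pow B. x ^ card E * y ^ (Suc (card B) - card E))
       + (\<Sum>E\<in>insert a ` Pow B. x ^ card E * y ^ (Suc (card B) - card E))"
    unfolding Pi using insert disj fin by (simp add: sum.union_disjoint)
  also have "(\<Sum>E\<in>insert a ` Pow B. x ^ card E * y ^ (Suc (card B) - card E))
     = (\<Sum>E\<in>Pow B. x ^ card (insert a E) * y ^ (Suc (card B) - card (insert a E)))"
    by (rule sum.reindex_cong[OF inj refl]) simp
  also have "\<dots> = x * (\<Sum>E\<in>Pow B. x ^ card E * y ^ (card B - card E))"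
    unfolding sum_distrib_left by (rule sum.cong[OF refl]) (simp add: cE)
  also have "(\<Sum>E\<in>Pow B. x ^ card E * y ^ (Suc (card B) - card E))
     = y * (\<Sum>E\<in>Pow B. x ^ card E * y ^ (card B - card E))"
    unfolding sum_distrib_left
    by (rule sum.cong[OF refl]) (simp add: Suc_diff_le cle)
  finally show ?case using insert by (simp add: algebra_simps)
qed

lemma Pow_eq_Collect[simp]: "{E. E \<subseteq> A} = Pow A" by auto

definition UU :: "nat \<Rightarrow> (nat \<times> nat) set" where "UU n = {..<n} \<times> {..<n}"
definition WW :: "nat \<Rightarrow> real \<Rightarrow> (nat \<times> nat) set \<Rightarrow> real" where
  "WW n p E = p ^ card E * (1 - p) ^ (n * n - card E)"

lemma UU_fin[simp]: "finite (UU n)" by (simp add: UU_def)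
lemma UU_card: "card (UU n) = n * n" by (simp add: UU_def card_cartesian_product)

lemma prob_alt: "prob_Gnnp n p P = (\<Sum>E\<in>{E\<in>Pow (UU n). P E}. WW n p E)"
  unfolding prob_Gnnp_def WW_def UU_def by (rule sum.cong) auto

lemma WW_nonneg: "0 \<le> p \<Longrightarrow> p \<le> 1 \<Longrightarrow> 0 \<le> WW n p E"
  by (simp add: WW_def)

lemma prob_True: "prob_Gnnp n p (\<lambda>_. True) = 1"
  using binsum[of "UU n" p "1-p"] by (simp add: prob_alt WW_def UU_card)

lemma prob_nonneg: "0 \<le> p \<Longrightarrow> p \<le> 1 \<Longrightarrow> 0 \<le> prob_Gnnp n p P"
  unfolding prob_alt by (rule sum_nonneg) (simp add: WW_nonneg)

lemma prob_compl: "prob_Gnnp n p P + prob_Gnnp n p (\<lambda>E. \<not> P E) = 1"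
proof -
  have "prob_Gnnp n p P + prob_Gnnp n p (\<lambda>E. \<not> P E) = (\<Sum>E\<in>Pow (UU n). WW n p E)"
    unfolding prob_alt
    by (subst sum.union_disjoint[symmetric]) (auto intro!: sum.cong)
  also have "\<dots> = 1" using prob_True[of n p] by (simp add: prob_alt)
  finally show ?thesis .
qed

lemma prob_mono:
  assumes "0 \<le> p" "p \<le> 1" "\<And>E. E \<subseteq> UU n \<Longrightarrow> P E \<Longrightarrow> Q E"
  shows "prob_Gnnp n p P \<le> prob_Gnnp n p Q"
  unfolding prob_alt
  by (rule sum_mono2) (use assms in \<open>auto simp: WW_nonneg\<close>)

lemma prob_le1: "0 \<le> p \<Longrightarrow> p \<le> 1 \<Longrightarrow> prob_Gnnp n p P \<le> 1"
  using prob_compl[of n p P] prob_nonneg[of p n "\<lambda>E. \<not> P E"] by linarith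

lemma prob_union:
  assumes "finite I" "0 \<le> p" "p \<le> 1"
  shows "prob_Gnnp n p (\<lambda>E. \<exists>i\<in>I. P i E) \<le> (\<Sum>i\<in>I. prob_Gnnp n p (P i))"
  using assms(1)
proof (induction I rule: finite_induct)
  case empty then show ?case by (simp add: prob_alt)
next
  case (insert a I)
  have "prob_Gnnp n p (\<lambda>E. \<exists>i\<in>insert a I. P i E)
      \<le> prob_Gnnp n p (P a) + prob_Gnnp n p (\<lambda>E. \<exists>i\<in>I. P i E)"
  proof -
    have "{E \<in> Pow (UU n). \<exists>i\<in>insert a I. P i E} \<subseteq>
          {E \<in> Pow (UU n). P a E} \<union> {E \<in> Pow (UU n). \<exists>i\<in>I. P i E}" by auto
    then have "(\<Sum>E\<in>{E \<in> Pow (UU n). \<exists>i\<in>insert a I. P i E}. WW n p E) \<le>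
       (\<Sum>E\<in>{E \<in> Pow (UU n). P a E} \<union> {E \<in> Pow (UU n). \<exists>i\<in>I. P i E}. WW n p E)"
      by (intro sum_mono2) (auto simp: WW_nonneg assms)
    also have "\<dots> \<le> (\<Sum>E\<in>{E \<in> Pow (UU n). P a E}. WW n p E) +
        (\<Sum>E\<in>{E \<in> Pow (UU n). \<exists>i\<in>I. P i E}. WW n p E)"
        by (subst sum_Un) (auto simp: WW_nonneg assms intro!: sum_nonneg)
    finally show ?thesis by (simp add: prob_alt)
  qed
  then show ?case using insert by simp
qed

lemma markov:
  assumes "0 \<le> p" "p \<le> 1" "0 < c" "\<And>E. 0 \<le> X E"
  shows "prob_Gnnp n p (\<lambda>E. c \<le> X E) \<le> (\<Sum>E\<in>Pow (UU n). WW n p E * X E) / c"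
proof -
  have "c * prob_Gnnp n p (\<lambda>E. c \<le> X E) = (\<Sum>E\<in>{E\<in>Pow (UU n). c \<le> X E}. WW n p E * c)"
    by (simp add: prob_alt sum_distrib_left mult.commute)
  also have "\<dots> \<le> (\<Sum>E\<in>{E\<in>Pow (UU n). c \<le> X E}. WW n p E * X E)"
    by (rule sum_mono) (auto intro: mult_left_mono simp: WW_nonneg assms)
  also have "\<dots> \<le> (\<Sum>E\<in>Pow (UU n). WW n p E * X E)"
    by (rule sum_mono2) (auto simp: WW_nonneg assms)
  finally show ?thesis using assms(3) by (simp add: field_simps)
qed

lemma expect_count:
  assumes "finite S"
  shows "(\<Sum>E\<in>Pow (UU n). WW n p E * real (card {s\<in>S. Q s E})) = (\<Sum>s\<in>S. prob_Gnnp n p (Q s))"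
proof -
  have "(\<Sum>E\<in>Pow (UU n). WW n p E * real (card {s\<in>S. Q s E}))
     = (\<Sum>E\<in>Pow (UU n). \<Sum>s\<in>S. if Q s E then WW n p E else 0)"
  proof (rule sum.cong[OF refl])
    fix E
    have "(\<Sum>s\<in>S. if Q s E then WW n p E else 0) = (\<Sum>s\<in>{s\<in>S. Q s E}. WW n p E)"
      by (rule sum.inter_filter[OF assms, symmetric])
    then show "WW n p E * real (card {s\<in>S. Q s E}) = (\<Sum>s\<in>S. if Q s E then WW n p E else 0)"
      by (simp add: mult.commute)
  qed
  also have "\<dots> = (\<Sum>s\<in>S. \<Sum>E\<in>Pow (UU n). if Q s E then WW n p E else 0)"
    by (rule sum.swap)
  also have "\<dots> = (\<Sum>s\<in>S. prob_Gnnp n p (Q s))"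
  proof (rule sum.cong[OF refl])
    fix s
    have "{E\<in>Pow (UU n). Q s E} = {E. E \<subseteq> UU n \<and> Q s E}" by auto
    then show "(\<Sum>E\<in>Pow (UU n). if Q s E then WW n p E else 0) = prob_Gnnp n p (Q s)"
      unfolding prob_alt using sum.inter_filter[of "Pow (UU n)" "WW n p" "Q s"] by simp
  qed
  finally show ?thesis .
qed

lemma prob_avoid:
  assumes "F \<subseteq> UU n"
  shows "prob_Gnnp n p (\<lambda>E. E \<inter> F = {}) = (1 - p) ^ card F"
proof -
  have fF: "finite F" by (rule finite_subset[OF assms UU_fin])
  have eq: "{E. E \<subseteq> UU n \<and> E \<inter> F = {}} = Pow (UU n - F)" by auto
  have cU: "card (UU n) = card (UU n - F) + card F"
    using assms fF by (simp add: card_Diff_subset card_mono)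
  have "(\<Sum>E\<in>Pow (UU n - F). WW n p E) =
      (\<Sum>E\<in>Pow (UU n - F). (p ^ card E * (1-p) ^ (card (UU n - F) - card E)) * (1-p) ^ card F)"
  proof (rule sum.cong[OF refl])
    fix E assume "E \<in> Pow (UU n - F)"
    then have "card E \<le> card (UU n - F)" by (simp add: card_mono)
    then have "n * n - card E = (card (UU n - F) - card E) + card F" using cU UU_card[of n] by simp
    then show "WW n p E = (p ^ card E * (1-p) ^ (card (UU n - F) - card E)) * (1-p) ^ card F"
      by (simp add: WW_def power_add)
  qed
  also have "\<dots> = (1-p) ^ card F"
    using binsum[of "UU n - F" p "1-p"] by (simp add: sum_distrib_right[symmetric])
  finally show ?thesis by (simp add: prob_alt eq)
qed

lemma as_from_bad:
  assumes p01: "\<And>n. 0 \<le> p n \<and> p n \<le> 1"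
    and bad: "(\<lambda>n. prob_Gnnp n (p n) (B n)) \<longlonglongrightarrow> 0"
    and ev: "\<forall>\<^sub>F n in sequentially. \<forall>E. E \<subseteq> UU n \<longrightarrow> \<not> B n E \<longrightarrow> G n E"
  shows "almost_surely p G"
  unfolding almost_surely_def
proof (rule tendsto_sandwich[of "\<lambda>n. 1 - prob_Gnnp n (p n) (B n)" _ _ "\<lambda>_. 1"])
  show "\<forall>\<^sub>F n in sequentially. 1 - prob_Gnnp n (p n) (B n) \<le> prob_Gnnp n (p n) (G n)"
    using ev
  proof eventually_elim
    case (elim n)
    have "prob_Gnnp n (p n) (\<lambda>E. \<not> B n E) \<le> prob_Gnnp n (p n) (G n)"
      by (rule prob_mono) (use p01 elim in auto)
    then show ?case using prob_compl[of n "p n" "B n"] by linarith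
  qed
  show "\<forall>\<^sub>F n in sequentially. prob_Gnnp n (p n) (G n) \<le> 1"
    using prob_le1 p01 by auto
  show "(\<lambda>n. 1 - prob_Gnnp n (p n) (B n)) \<longlonglongrightarrow> 1"
    using tendsto_diff[OF tendsto_const bad, of 1] by simp
qed simp



definition JJ :: "nat \<Rightarrow> (nat \<times> nat) set \<Rightarrow> nat \<Rightarrow> (nat set \<times> nat set) set" where
  "JJ n E t = {(X,Y). X \<subseteq> {..<n} \<and> Y \<subseteq> {..<n} \<and> card X + card Y = t \<and> E \<inter> (X \<times> Y) = {}}"

definition MM :: "nat \<Rightarrow> (nat \<times> nat) set \<Rightarrow> nat \<Rightarrow> (nat set \<times> nat set) set" where
  "MM n E t = {xy \<in> JJ n E t. fst xy \<noteq> {} \<and> snd xy \<noteq> {}}"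

definition Mset :: "nat \<Rightarrow> nat \<Rightarrow> (nat set \<times> nat set) set" where
  "Mset n t = {(X,Y). X \<subseteq> {..<n} \<and> Y \<subseteq> {..<n} \<and> card X + card Y = t \<and> X \<noteq> {} \<and> Y \<noteq> {}}"

lemma Mset_fin: "finite (Mset n t)"
  by (rule finite_subset[of _ "Pow {..<n} \<times> Pow {..<n}"]) (auto simp: Mset_def)

lemma MM_eq: "MM n E t = {xy \<in> Mset n t. E \<inter> (fst xy \<times> snd xy) = {}}"
  by (auto simp: MM_def JJ_def Mset_def)

lemma indep_JJ: "indep_count n E t = card (JJ n E t)"
proof -
  let ?f = "\<lambda>(X,Y). Inl ` X \<union> Inr ` Y :: (nat + nat) set"
  let ?g = "\<lambda>S. ({i. Inl i \<in> S}, {j. Inr j \<in> S})"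
  have "bij_betw ?f (JJ n E t) {S. bip_independent n E S \<and> card S = t}"
  proof (rule bij_betw_byWitness[where f'="?g"])
    show "\<forall>a\<in>JJ n E t. ?g (?f a) = a" by auto
    show "\<forall>a'\<in>{S. bip_independent n E S \<and> card S = t}. ?f (?g a') = a'"
    proof
      fix S assume "S \<in> {S. bip_independent n E S \<and> card S = t}"
      show "?f (?g S) = S"
      proof (rule set_eqI)
        fix v show "v \<in> ?f (?g S) \<longleftrightarrow> v \<in> S" by (cases v) auto
      qed
    qed
    show "?f ` JJ n E t \<subseteq> {S. bip_independent n E S \<and> card S = t}"
    proof
      fix S assume "S \<in> ?f ` JJ n E t"
      then obtain X Y where XY: "(X,Y) \<in> JJ n E t" and S: "S = Inl ` X \<union> Inr ` Y" by auto
      have fX: "finite X" "finite Y" using XY by (auto simp: JJ_def intro: finite_subset)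
      have "card S = card X + card Y"
        unfolding S by (subst card_Un_disjoint) (auto simp: fX card_image)
      moreover have "bip_independent n E S"
        using XY unfolding S bip_independent_def bip_vertices_def JJ_def by auto
      ultimately show "S \<in> {S. bip_independent n E S \<and> card S = t}" using XY by (auto simp: JJ_def)
    qed
    show "?g ` {S. bip_independent n E S \<and> card S = t} \<subseteq> JJ n E t"
    proof
      fix XY assume "XY \<in> ?g ` {S. bip_independent n E S \<and> card S = t}"
      then obtain S where S: "bip_independent n E S" "card S = t" and XY: "XY = ?g S" by auto
      have sub: "S \<subseteq> Inl ` {..<n} \<union> Inr ` {..<n}" using S by (simp add: bip_independent_def bip_vertices_def)
      have X: "{i. Inl i \<in> S} \<subseteq> {..<n}" "{j. Inr j \<in> S} \<subseteq> {..<n}" using sub by auto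
      have eqS: "S = Inl ` {i. Inl i \<in> S} \<union> Inr ` {j. Inr j \<in> S}"
      proof (rule set_eqI)
        fix v show "v \<in> S \<longleftrightarrow> v \<in> Inl ` {i. Inl i \<in> S} \<union> Inr ` {j. Inr j \<in> S}" by (cases v) auto
      qed
      have fX: "finite {i. Inl i \<in> S}" "finite {j. Inr j \<in> S}" using X by (auto intro: finite_subset)
      have "card S = card {i. Inl i \<in> S} + card {j. Inr j \<in> S}"
        by (subst eqS, subst card_Un_disjoint) (auto simp: fX card_image)
      then show "XY \<in> JJ n E t" using S X XY unfolding JJ_def bip_independent_def by auto
    qed
  qed
  then show ?thesis unfolding indep_count_def by (simp add: bij_betw_same_card)
qed

lemma card_subsets_n: "card {Y. Y \<subseteq> {..<n} \<and> card Y = t} = n choose t"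
  using n_subsets[of "{..<n}" t] by simp

lemma JJ_split:
  assumes "1 \<le> t"
  shows "card (JJ n E t) = 2 * (n choose t) + card (MM n E t)"
proof -
  let ?A = "(\<lambda>Y. ({}::nat set, Y)) ` {Y. Y \<subseteq> {..<n} \<and> card Y = t}"
  let ?B = "(\<lambda>X. (X, {}::nat set)) ` {X. X \<subseteq> {..<n} \<and> card X = t}"
  have fin: "finite (JJ n E t)"
    by (rule finite_subset[of _ "Pow {..<n} \<times> Pow {..<n}"]) (auto simp: JJ_def)
  have eq: "JJ n E t = ?A \<union> ?B \<union> MM n E t"
  proof (rule set_eqI)
    fix xy show "xy \<in> JJ n E t \<longleftrightarrow> xy \<in> ?A \<union> ?B \<union> MM n E t"
      by (cases xy) (auto simp: JJ_def MM_def)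
  qed
  have d1: "?A \<inter> ?B = {}" using assms by auto
  have d2: "(?A \<union> ?B) \<inter> MM n E t = {}" by (auto simp: MM_def)
  have cA: "card ?A = n choose t"
    by (subst card_image) (auto simp: inj_on_def card_subsets_n)
  have cB: "card ?B = n choose t"
    by (subst card_image) (auto simp: inj_on_def card_subsets_n)
  have fAll: "finite (?A \<union> ?B \<union> MM n E t)" using fin by (simp only: eq[symmetric])
  have fAB: "finite (?A \<union> ?B)" "finite (MM n E t)"
    using fAll by (simp_all only: finite_Un)
  have "card (JJ n E t) = card (?A \<union> ?B) + card (MM n E t)"
    unfolding eq by (rule card_Un_disjoint[OF fAB d2])
  also have "card (?A \<union> ?B) = card ?A + card ?B"
    by (rule card_Un_disjoint) (use fAB d1 in auto)
  finally show ?thesis using cA cB by simp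
qed

lemma JJ_zero: "card (JJ n E 0) = 1"
proof -
  have "JJ n E 0 = {({},{})}"
  proof (rule set_eqI)
    fix xy show "xy \<in> JJ n E 0 \<longleftrightarrow> xy \<in> {({},{})}"
    proof (cases xy)
      case (Pair X Y)
      show ?thesis
      proof
        assume "xy \<in> JJ n E 0"
        then have "X \<subseteq> {..<n}" "Y \<subseteq> {..<n}" "card X = 0" "card Y = 0" using Pair by (auto simp: JJ_def)
        then have "X = {}" "Y = {}" by (meson card_0_eq finite_lessThan finite_subset)+
        then show "xy \<in> {({},{})}" using Pair by simp
      qed (auto simp: JJ_def Pair)
    qed
  qed
  then show ?thesis by simp
qed

lemma indep_count_eq:
  "1 \<le> t \<Longrightarrow> indep_count n E t = 2 * (n choose t) + card (MM n E t)"
  by (simp add: indep_JJ JJ_split)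

lemma indep_count_0: "indep_count n E 0 = 1"
  by (simp add: indep_JJ JJ_zero)

lemma expect_MM:
  "(\<Sum>E\<in>Pow (UU n). WW n p E * real (card (MM n E t)))
     = (\<Sum>xy\<in>Mset n t. (1 - p) ^ (card (fst xy) * card (snd xy)))"
proof -
  have "(\<Sum>E\<in>Pow (UU n). WW n p E * real (card (MM n E t)))
      = (\<Sum>xy\<in>Mset n t. prob_Gnnp n p (\<lambda>E. E \<inter> (fst xy \<times> snd xy) = {}))"
    unfolding MM_eq by (rule expect_count[OF Mset_fin])
  also have "\<dots> = (\<Sum>xy\<in>Mset n t. (1 - p) ^ (card (fst xy) * card (snd xy)))"
  proof (rule sum.cong[OF refl])
    fix xy assume xy: "xy \<in> Mset n t"
    then have sub: "fst xy \<times> snd xy \<subseteq> UU n" by (auto simp: Mset_def UU_def)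
    show "prob_Gnnp n p (\<lambda>E. E \<inter> (fst xy \<times> snd xy) = {}) = (1 - p) ^ (card (fst xy) * card (snd xy))"
      by (simp add: prob_avoid[OF sub] card_cartesian_product)
  qed
  finally show ?thesis .
qed

lemma Mset_sum:
  fixes q :: real
  shows "(\<Sum>xy\<in>Mset n t. q ^ (card (fst xy) * card (snd xy)))
     = (\<Sum>a\<in>{1..<t}. real (n choose a) * real (n choose (t - a)) * q ^ (a * (t - a)))"
proof -
  have img: "(card \<circ> fst) ` Mset n t \<subseteq> {1..<t}"
  proof
    fix a assume "a \<in> (card \<circ> fst) ` Mset n t"
    then obtain X Y where XY: "(X,Y) \<in> Mset n t" "a = card X" by auto
    have f: "finite X" "finite Y" using XY by (auto simp: Mset_def intro: finite_subset)
    have "card X \<noteq> 0" "card Y \<noteq> 0" using XY f by (auto simp: Mset_def)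
    then show "a \<in> {1..<t}" using XY by (auto simp: Mset_def)
  qed
  have "(\<Sum>xy\<in>Mset n t. q ^ (card (fst xy) * card (snd xy)))
      = (\<Sum>a\<in>{1..<t}. \<Sum>xy\<in>{xy \<in> Mset n t. (card \<circ> fst) xy = a}. q ^ (card (fst xy) * card (snd xy)))"
    by (rule sum.group[OF Mset_fin _ img, symmetric]) simp
  also have "\<dots> = (\<Sum>a\<in>{1..<t}. real (n choose a) * real (n choose (t - a)) * q ^ (a * (t - a)))"
  proof (rule sum.cong[OF refl])
    fix a assume a: "a \<in> {1..<t}"
    have eq: "{xy \<in> Mset n t. (card \<circ> fst) xy = a} =
       {X. X \<subseteq> {..<n} \<and> card X = a} \<times> {Y. Y \<subseteq> {..<n} \<and> card Y = t - a}"
    proof (rule set_eqI)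
      fix xy show "xy \<in> {xy \<in> Mset n t. (card \<circ> fst) xy = a} \<longleftrightarrow>
          xy \<in> {X. X \<subseteq> {..<n} \<and> card X = a} \<times> {Y. Y \<subseteq> {..<n} \<and> card Y = t - a}"
        using a by (cases xy) (auto simp: Mset_def)
    qed
    have "(\<Sum>xy\<in>{xy \<in> Mset n t. (card \<circ> fst) xy = a}. q ^ (card (fst xy) * card (snd xy)))
        = (\<Sum>xy\<in>{X. X \<subseteq> {..<n} \<and> card X = a} \<times> {Y. Y \<subseteq> {..<n} \<and> card Y = t - a}. q ^ (a * (t - a)))"
      unfolding eq by (rule sum.cong[OF refl]) auto
    also have "\<dots> = real (n choose a) * real (n choose (t - a)) * q ^ (a * (t - a))"
      by (simp add: card_cartesian_product card_subsets_n)
    finally show "(\<Sum>xy\<in>{xy \<in> Mset n t. (card \<circ> fst) xy = a}. q ^ (card (fst xy) * card (snd xy)))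
        = real (n choose a) * real (n choose (t - a)) * q ^ (a * (t - a))" .
  qed
  finally show ?thesis .
qed

lemma expect_MM_sum:
  "(\<Sum>E\<in>Pow (UU n). WW n p E * real (card (MM n E t)))
     = (\<Sum>a\<in>{1..<t}. real (n choose a) * real (n choose (t - a)) * (1 - p) ^ (a * (t - a)))"
  using expect_MM Mset_sum by simp



lemma binom_step: "Suc t * (n choose Suc t) = (n - t) * (n choose t)"
proof (cases n)
  case 0 then show ?thesis by simp
next
  case (Suc m)
  have "Suc t * (n choose Suc t) = n * (m choose t)" using Suc Suc_times_binomial[of t m] by simp
  also have "\<dots> = (n - t) * (n choose t)" using binomial_absorb_comp[of n t] Suc by simp
  finally show ?thesis .
qed

lemma inc_step:
  fixes i :: "nat \<Rightarrow> nat" and M :: "nat \<Rightarrow> nat"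
  assumes i: "\<And>s. 1 \<le> s \<Longrightarrow> i s = 2 * (n choose s) + M s"
    and t: "1 \<le> t" "2 * t + 1 \<le> n"
    and h: "Suc t * M t \<le> (n - 2 * t - 1) * (n choose t)"
  shows "i t \<le> i (Suc t)"
proof -
  have "Suc t * ((n choose t) + M t) \<le> Suc t * (n choose t) + (n - 2 * t - 1) * (n choose t)"
    using h by (simp only: add_mult_distrib2)
  also have "\<dots> = (n - t) * (n choose t)"
  proof -
    have "Suc t + (n - 2 * t - 1) = n - t" using t by simp
    then show ?thesis by (metis add_mult_distrib)
  qed
  also have "\<dots> = Suc t * (n choose Suc t)" using binom_step[of t n] by simp
  finally have "(n choose t) + M t \<le> n choose Suc t" by (simp only: mult_le_cancel1)
  then show ?thesis using i[of t] i[of "Suc t"] t by simp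
qed

lemma dec_step:
  fixes i :: "nat \<Rightarrow> nat" and M :: "nat \<Rightarrow> nat"
  assumes i: "\<And>s. 1 \<le> s \<Longrightarrow> i s = 2 * (n choose s) + M s"
    and t: "1 \<le> t" "n \<le> 2 * t + 1" "t < n"
    and h: "(n - t) * M (Suc t) \<le> (2 * t + 1 - n) * (n choose Suc t)"
  shows "i (Suc t) \<le> i t"
proof -
  have "(n - t) * ((n choose Suc t) + M (Suc t)) \<le> (n - t) * (n choose Suc t) + (2 * t + 1 - n) * (n choose Suc t)"
    using h by (simp only: add_mult_distrib2)
  also have "\<dots> = Suc t * (n choose Suc t)"
  proof -
    have "(n - t) + (2 * t + 1 - n) = Suc t" using t by simp
    then show ?thesis by (metis add_mult_distrib)
  qed
  also have "\<dots> = (n - t) * (n choose t)" using binom_step[of t n] by simp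
  finally have "(n choose Suc t) + M (Suc t) \<le> n choose t" using t by (simp only: mult_le_cancel1)
  then show ?thesis using i[of t] i[of "Suc t"] t by simp
qed

lemma unimodal_crit:
  fixes i :: "nat \<Rightarrow> nat"
  assumes m: "m \<le> n div 2"
    and INC: "\<And>t. m \<le> t \<Longrightarrow> 2 * t + 1 < n \<Longrightarrow> i t \<le> i (Suc t)"
    and DEC: "\<And>t. m \<le> t \<Longrightarrow> t < n \<Longrightarrow> n < 2 * t + 1 \<Longrightarrow> i (Suc t) \<le> i t"
  shows "unimodal_half i m n"
proof (cases "even n")
  case True
  have "unimodal_mode i m n (n div 2)"
    unfolding unimodal_mode_def using m True
    by (auto intro!: INC DEC elim!: evenE)
  then show ?thesis by (simp add: unimodal_half_def)
next
  case False
  then obtain h where n: "n = 2 * h + 1" by (metis oddE)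
  have hd: "n div 2 = h" "(n + 1) div 2 = Suc h" "Suc n div 2 = Suc h" using n by simp_all
  show ?thesis
  proof (cases "i (Suc h) \<le> i h")
    case True
    have "unimodal_mode i m n h"
      unfolding unimodal_mode_def using m hd
    proof (intro conjI allI impI)
      fix t assume "m \<le> t \<and> t < h" then show "i t \<le> i (Suc t)" using n by (intro INC) auto
    next
      fix t assume a: "h \<le> t \<and> t < n"
      show "i (Suc t) \<le> i t"
      proof (cases "t = h")
        case True then show ?thesis using \<open>i (Suc h) \<le> i h\<close> by simp
      next
        case False then show ?thesis using a n m hd by (intro DEC) auto
      qed
    qed (use n in auto)
    then show ?thesis by (simp add: unimodal_half_def hd)
  next
    case False
    have "unimodal_mode i m n (Suc h)"
      unfolding unimodal_mode_def using m hd
    proof (intro conjI allI impI)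
      fix t assume a: "m \<le> t \<and> t < Suc h"
      show "i t \<le> i (Suc t)"
      proof (cases "t = h")
        case True then show ?thesis using False by simp
      next
        case f: False then show ?thesis using a n by (intro INC) auto
      qed
    next
      fix t assume a: "Suc h \<le> t \<and> t < n"
      then show "i (Suc t) \<le> i t" using n m hd by (intro DEC) auto
    qed (use n in auto)
    then show ?thesis by (simp add: unimodal_half_def hd)
  qed
qed



lemma key_poly:
  fixes K N :: real
  assumes "1 \<le> K" "K + 1 \<le> N"
  shows "(6*N+1)^2 * (K * (N-K)) \<le> 36*N^2 * ((N-K+1)*(K+1))"
proof -
  have kk: "K * (N-K) \<le> N * N" using assms by (intro mult_mono) auto
  have k0: "0 \<le> K * (N-K)" using assms by simp
  have e1: "(6*N+1)^2 * (K * (N-K)) = 36*N^2*(K*(N-K)) + (12*N+1)*(K*(N-K))"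
    by (simp add: power2_eq_square algebra_simps)
  have e2: "36*N^2 * ((N-K+1)*(K+1)) = 36*N^2*(K*(N-K)) + 36*(N*N)*(N+1)"
    by (simp add: power2_eq_square algebra_simps)
  have "(12*N+1)*(K*(N-K)) \<le> (12*N+1)*(N*N)" using kk assms by (intro mult_left_mono) auto
  also have "\<dots> \<le> (36*(N+1))*(N*N)" using assms by (intro mult_right_mono) auto
  finally show ?thesis unfolding e1 e2 by (simp add: algebra_simps)
qed

lemma logconc_real:
  fixes A B D x y z K N :: real
  assumes K: "1 \<le> K" "K + 1 \<le> N"
    and pos: "0 \<le> A" "0 \<le> B" "0 \<le> D" "0 \<le> x" "0 \<le> y" "0 \<le> z"
    and hx: "3*N*x \<le> A" and hy: "3*N*y \<le> D"
    and i1: "K * B = (N - K + 1) * A" and i2: "(K+1) * D = (N - K) * B"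
  shows "(2*A + x) * (2*D + y) \<le> (2*B + z)^2"
proof -
  have N0: "0 < N" using K by simp
  have P0: "0 < (N-K+1)*(K+1)" using K by simp
  have a1: "3*N*(2*A + x) \<le> (6*N+1)*A" using hx by (simp add: algebra_simps)
  have a2: "3*N*(2*D + y) \<le> (6*N+1)*D" using hy by (simp add: algebra_simps)
  have "(3*N*(2*A + x)) * (3*N*(2*D + y)) \<le> ((6*N+1)*A) * ((6*N+1)*D)"
  proof (rule mult_mono[OF a1 a2])
    show "0 \<le> (6*N+1)*A" using pos N0 by simp
    show "0 \<le> 3*N*(2*D + y)" using pos N0 by simp
  qed
  then have s1: "9*N^2*((2*A + x) * (2*D + y)) \<le> (6*N+1)^2*(A*D)"
    by (simp add: power2_eq_square algebra_simps)
  have "(6*N+1)^2*(A*D) * ((N-K+1)*(K+1)) = (6*N+1)^2 * ((K*B)*((N-K)*B))"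
  proof -
    have "(A*D) * ((N-K+1)*(K+1)) = ((N - K + 1) * A) * ((K+1) * D)" by (simp only: mult_ac)
    also have "\<dots> = (K*B)*((N-K)*B)" by (simp only: i1[symmetric] i2)
    finally show ?thesis by (simp only: mult.assoc)
  qed
  also have "\<dots> = (6*N+1)^2 * (K*(N-K)) * B^2" by (simp add: power2_eq_square algebra_simps)
  also have "\<dots> \<le> 36*N^2 * ((N-K+1)*(K+1)) * B^2"
    using key_poly[OF K] by (intro mult_right_mono) auto
  finally have s2: "(6*N+1)^2*(A*D) * ((N-K+1)*(K+1)) \<le> 36*N^2 * ((N-K+1)*(K+1)) * B^2" .
  have "9*N^2*((2*A + x) * (2*D + y)) * ((N-K+1)*(K+1)) \<le> (6*N+1)^2*(A*D) * ((N-K+1)*(K+1))"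
    using s1 P0 by (intro mult_right_mono) auto
  with s2 have "(9*N^2*((N-K+1)*(K+1))) * ((2*A + x) * (2*D + y)) \<le> (9*N^2*((N-K+1)*(K+1))) * (4*B^2)"
    by (simp add: algebra_simps)
  then have "(2*A + x) * (2*D + y) \<le> 4*B^2"
    using P0 N0 by (subst (asm) mult_le_cancel_left_pos) auto
  also have "\<dots> \<le> (2*B + z)^2" using pos by (simp add: power2_eq_square algebra_simps)
  finally show ?thesis .
qed

lemma good_large:
  fixes i :: "nat \<Rightarrow> nat" and M :: "nat \<Rightarrow> nat"
  assumes i: "\<And>s. 1 \<le> s \<Longrightarrow> i s = 2 * (n choose s) + M s"
    and m: "1 \<le> m"
    and G: "\<And>s. m \<le> s \<Longrightarrow> s \<le> n \<Longrightarrow> 3 * n * M s \<le> n choose s"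
  shows "log_concave_on i m n"
    and "\<And>t. m \<le> t \<Longrightarrow> 2 * t + 1 < n \<Longrightarrow> i t \<le> i (Suc t)"
    and "\<And>t. m \<le> t \<Longrightarrow> t < n \<Longrightarrow> n < 2 * t + 1 \<Longrightarrow> i (Suc t) \<le> i t"
proof -
  fix t assume t: "m \<le> t" "2 * t + 1 < n"
  have "Suc t * M t \<le> 3 * n * M t" using t by (intro mult_right_mono) auto
  also have "\<dots> \<le> n choose t" using G t by auto
  also have "\<dots> \<le> (n - 2 * t - 1) * (n choose t)" using t by simp
  finally show "i t \<le> i (Suc t)" using t m by (intro inc_step[OF i]) auto
next
  fix t assume t: "m \<le> t" "t < n" "n < 2 * t + 1"
  have "(n - t) * M (Suc t) \<le> 3 * n * M (Suc t)" by (intro mult_right_mono) auto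
  also have "\<dots> \<le> n choose Suc t" using G t by auto
  also have "\<dots> \<le> (2 * t + 1 - n) * (n choose Suc t)" using t by simp
  finally show "i (Suc t) \<le> i t" using t m by (intro dec_step[OF i]) auto
next
  show "log_concave_on i m n"
    unfolding log_concave_on_def
  proof (intro allI impI)
    fix k assume k: "m < k \<and> k < n"
    define j where "j = k - 1"
    have j: "k = Suc j" "1 \<le> j" using k m by (auto simp: j_def)
    have id1: "k * (n choose k) = (n - k + 1) * (n choose j)"
    proof -
      have "n - j = Suc (n - k)" using j k Suc_diff_Suc by auto
      then show ?thesis using binom_step[of j n] j by simp
    qed
    have id2: "(k+1) * (n choose Suc k) = (n - k) * (n choose k)"
      using binom_step[of k n] by simp
    have R: "real ((2 * (n choose j) + M j) * (2 * (n choose Suc k) + M (Suc k)))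
        \<le> real ((2 * (n choose k) + M k)^2)"
    proof -
      have "(2 * real (n choose j) + real (M j)) * (2 * real (n choose Suc k) + real (M (Suc k)))
         \<le> (2 * real (n choose k) + real (M k))^2"
      proof (rule logconc_real[where K = "real k" and N = "real n"])
        show "1 \<le> real k" "real k + 1 \<le> real n" using k m by auto
        show "3 * real n * real (M j) \<le> real (n choose j)"
        proof -
          have "3*n*M j \<le> n choose j" using G[of j] k j by auto
          then have "real (3*n*M j) \<le> real (n choose j)" by (simp only: of_nat_le_iff)
          then show ?thesis by simp
        qed
        show "3 * real n * real (M (Suc k)) \<le> real (n choose Suc k)"
        proof -
          have "3*n*M (Suc k) \<le> n choose Suc k" using G[of "Suc k"] k by auto
          then have "real (3*n*M (Suc k)) \<le> real (n choose Suc k)" by (simp only: of_nat_le_iff)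
          then show ?thesis by simp
        qed
        show "real k * real (n choose k) = (real n - real k + 1) * real (n choose j)"
        proof -
          have "real (k * (n choose k)) = real ((n - k + 1) * (n choose j))" using id1 by (simp only:)
          moreover have "real (n - k + 1) = real n - real k + 1" using k by (simp add: of_nat_diff)
          ultimately show ?thesis by (simp only: of_nat_mult)
        qed
        show "(real k + 1) * real (n choose Suc k) = (real n - real k) * real (n choose k)"
        proof -
          have "real ((k+1) * (n choose Suc k)) = real ((n - k) * (n choose k))" using id2 by (simp only:)
          moreover have "real (n - k) = real n - real k" using k by (simp add: of_nat_diff)
          ultimately show ?thesis by (simp add: algebra_simps)
        qed
      qed auto
      then show ?thesis by simp
    qed
    then have "(2 * (n choose j) + M j) * (2 * (n choose Suc k) + M (Suc k)) \<le> (2 * (n choose k) + M k)^2"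
      by (simp only: of_nat_le_iff)
    then show "i (k - 1) * i (k + 1) \<le> (i k)\<^sup>2"
      using i[of j] i[of "Suc k"] i[of k] j by simp
  qed
qed



lemma binom_shift:
  assumes "b \<le> t" "t \<le> n"
  shows "(n choose (t - b)) * (n + 1 - t) ^ b \<le> t ^ b * (n choose t)"
  using assms(1)
proof (induction b)
  case 0 then show ?case by simp
next
  case (Suc b)
  define s where "s = t - b"
  have s: "1 \<le> s" "s \<le> t" "t - Suc b = s - 1" using Suc.prems by (auto simp: s_def)
  have st: "s * (n choose s) = (n + 1 - s) * (n choose (s - 1))"
    using binom_step[of "s - 1" n] s assms by (simp add: Suc_diff_le)
  have "(n choose (t - Suc b)) * (n + 1 - t) ^ Suc b
      = ((n choose (s - 1)) * (n + 1 - t)) * (n + 1 - t) ^ b" by (simp add: s)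
  also have "\<dots> \<le> ((n choose (s - 1)) * (n + 1 - s)) * (n + 1 - t) ^ b"
    using s by (intro mult_right_mono mult_left_mono) auto
  also have "\<dots> = s * ((n choose s) * (n + 1 - t) ^ b)" using st by (simp add: mult_ac)
  also have "\<dots> \<le> t * (t ^ b * (n choose t))"
    by (rule mult_mono) (use Suc s in \<open>auto simp: s_def\<close>)
  finally show ?case by simp
qed

lemma term_bound_b:
  fixes q :: real
  assumes q: "0 \<le> q" and b: "2 * b \<le> t" and tn: "t \<le> n"
  shows "real (n choose b) * real (n choose (t - b)) * q ^ (b * (t - b)) * real (n + 1 - t) ^ b
         \<le> (real n * real t * q ^ (t - b)) ^ b * real (n choose t)"
proof -
  have c1: "real (n choose b) \<le> real n ^ b"
    using binomial_le_pow[of b n] b tn by (simp flip: of_nat_power)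
  have c2: "real (n choose (t - b)) * real (n + 1 - t) ^ b \<le> real t ^ b * real (n choose t)"
  proof -
    have "(n choose (t - b)) * (n + 1 - t) ^ b \<le> t ^ b * (n choose t)"
      using binom_shift[of b t n] b tn by simp
    then have "real ((n choose (t - b)) * (n + 1 - t) ^ b) \<le> real (t ^ b * (n choose t))"
      by (simp only: of_nat_le_iff)
    then show ?thesis by simp
  qed
  have "real (n choose b) * real (n choose (t - b)) * q ^ (b * (t - b)) * real (n + 1 - t) ^ b
      = real (n choose b) * (real (n choose (t - b)) * real (n + 1 - t) ^ b) * (q ^ (t - b)) ^ b"
  proof -
    have pq: "q ^ (b * (t - b)) = (q ^ (t - b)) ^ b" by (metis power_mult mult.commute)
    show ?thesis by (simp only: pq mult_ac)
  qed
  also have "\<dots> \<le> real n ^ b * (real t ^ b * real (n choose t)) * (q ^ (t - b)) ^ b"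
    by (rule mult_right_mono[OF mult_mono[OF c1 c2]]) (use q in auto)
  also have "\<dots> = (real n * real t * q ^ (t - b)) ^ b * real (n choose t)"
    by (simp add: power_mult_distrib mult_ac)
  finally show ?thesis .
qed

lemma term_bound:
  fixes q :: real
  assumes q: "0 \<le> q" and a: "1 \<le> a" "a < t" and tn: "t \<le> n"
  defines "b \<equiv> min a (t - a)"
  shows "1 \<le> b" "2 * b \<le> t" "real t \<le> 2 * real (t - b)"
    and "real (n choose a) * real (n choose (t - a)) * q ^ (a * (t - a)) * real (n + 1 - t) ^ b
         \<le> (real n * real t * q ^ (t - b)) ^ b * real (n choose t)"
proof -
  show "1 \<le> b" "2 * b \<le> t" "real t \<le> 2 * real (t - b)" using a by (auto simp: b_def)
  have "real (n choose a) * real (n choose (t - a)) * q ^ (a * (t - a))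
      = real (n choose b) * real (n choose (t - b)) * q ^ (b * (t - b))"
  proof (cases "a \<le> t - a")
    case True then show ?thesis by (simp add: b_def)
  next
    case False
    then have "b = t - a" "t - b = a" using a by (auto simp: b_def)
    then show ?thesis by (simp add: mult_ac)
  qed
  moreover have "2 * b \<le> t" using a by (auto simp: b_def)
  ultimately show "real (n choose a) * real (n choose (t - a)) * q ^ (a * (t - a)) * real (n + 1 - t) ^ b
         \<le> (real n * real t * q ^ (t - b)) ^ b * real (n choose t)"
    using term_bound_b[OF q _ tn, of b] by simp
qed



lemma q_pow_exp:
  fixes p :: real assumes "0 \<le> p" "p \<le> 1"
  shows "(1 - p) ^ k \<le> exp (- (p * real k))"
proof -
  have "(1 - p) ^ k \<le> exp (- p) ^ k"
    using assms exp_ge_add_one_self[of "-p"] by (intro power_mono) auto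
  also have "\<dots> = exp (- (p * real k))" using exp_of_nat_mult[of k "-p"] by (simp add: mult.commute)
  finally show ?thesis .
qed

lemma term_large:
  fixes p :: real
  assumes p: "0 \<le> p" "p \<le> 1" and n: "1 \<le> n" and a: "1 \<le> a" "a < t" and tn: "t \<le> n"
    and pt: "12 * ln (real n) \<le> p * real t"
  shows "real (n choose a) * real (n choose (t - a)) * (1 - p) ^ (a * (t - a)) \<le> real (n choose t) / real n ^ 4"
proof -
  define b where "b = min a (t - a)"
  note tb = term_bound[of "1-p" a t n, folded b_def]
  have q0: "0 \<le> 1 - p" using p by simp
  have nn: "(0::real) < real n" using n by simp
  have qb: "(1 - p) ^ (t - b) \<le> 1 / real n ^ 6"
  proof -
    have "(1 - p) ^ (t - b) \<le> exp (- (p * real (t - b)))" by (rule q_pow_exp[OF p])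
    also have "\<dots> \<le> exp (- (6 * ln (real n)))"
    proof -
      have "p * real t \<le> 2 * (p * real (t - b))" using tb(3)[OF q0 a tn] p
        by (metis mult.left_commute mult_left_mono)
      then show ?thesis using pt by simp
    qed
    also have "\<dots> = 1 / real n ^ 6"
    proof -
      have "exp (real 6 * ln (real n)) = exp (ln (real n)) ^ 6" by (rule exp_of_nat_mult)
      then have "exp (6 * ln (real n)) = real n ^ 6" using nn by simp
      then show ?thesis by (simp add: exp_minus divide_inverse)
    qed
    finally show ?thesis .
  qed
  have z: "real n * real t * (1 - p) ^ (t - b) \<le> 1 / real n ^ 4"
  proof -
    have "real n * real t * (1 - p) ^ (t - b) \<le> real n * real n * (1 / real n ^ 6)"
      using tn qb q0 by (intro mult_mono) auto
    also have "\<dots> = 1 / real n ^ 4" using nn by (simp add: field_simps power_def)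
    finally show ?thesis .
  qed
  have z0: "0 \<le> real n * real t * (1 - p) ^ (t - b)" using q0 by simp
  have z1: "1 / real n ^ 4 \<le> 1" using n by simp
  have "(real n * real t * (1 - p) ^ (t - b)) ^ b \<le> (real n * real t * (1 - p) ^ (t - b)) ^ 1"
    using tb(1)[OF q0 a tn] z z1 z0 by (intro power_decreasing) auto
  also have "\<dots> \<le> 1 / real n ^ 4" using z by simp
  finally have zb: "(real n * real t * (1 - p) ^ (t - b)) ^ b \<le> 1 / real n ^ 4" .
  have ge1: "1 \<le> real (n + 1 - t) ^ b" using tn by (intro one_le_power) auto
  have T0: "0 \<le> real (n choose a) * real (n choose (t - a)) * (1 - p) ^ (a * (t - a))"
    using q0 by simp
  have "real (n choose a) * real (n choose (t - a)) * (1 - p) ^ (a * (t - a))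
      \<le> real (n choose a) * real (n choose (t - a)) * (1 - p) ^ (a * (t - a)) * real (n + 1 - t) ^ b"
    using T0 ge1 by (metis mult_left_mono mult.right_neutral)
  also have "\<dots> \<le> (real n * real t * (1 - p) ^ (t - b)) ^ b * real (n choose t)"
    by (rule tb(4)[OF q0 a tn])
  also have "\<dots> \<le> 1 / real n ^ 4 * real (n choose t)"
    by (rule mult_right_mono[OF zb]) simp
  finally show ?thesis by simp
qed

lemma EM_large:
  fixes p :: real
  assumes p: "0 \<le> p" "p \<le> 1" and n: "1 \<le> n" and t: "t \<le> n"
    and pt: "12 * ln (real n) \<le> p * real t"
  shows "(\<Sum>E\<in>Pow (UU n). WW n p E * real (card (MM n E t))) \<le> real (n choose t) / real n ^ 3"
proof -
  have "(\<Sum>E\<in>Pow (UU n). WW n p E * real (card (MM n E t)))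
     = (\<Sum>a\<in>{1..<t}. real (n choose a) * real (n choose (t - a)) * (1 - p) ^ (a * (t - a)))"
    by (rule expect_MM_sum)
  also have "\<dots> \<le> (\<Sum>a\<in>{1..<t}. real (n choose t) / real n ^ 4)"
    by (rule sum_mono) (use term_large[OF p n _ _ t pt] in auto)
  also have "\<dots> = real (t - 1) * (real (n choose t) / real n ^ 4)" by simp
  also have "\<dots> \<le> real n * (real (n choose t) / real n ^ 4)"
    using t by (intro mult_right_mono) auto
  also have "\<dots> = real (n choose t) / real n ^ 3" using n by (simp add: field_simps power_def)
  finally show ?thesis .
qed

lemma bad_large:
  fixes p :: real
  assumes p: "0 \<le> p" "p \<le> 1" and n: "1 \<le> n" and t: "t \<le> n"
    and pt: "12 * ln (real n) \<le> p * real t"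
  shows "prob_Gnnp n p (\<lambda>E. n choose t < 3 * n * card (MM n E t)) \<le> 3 / real n ^ 2"
proof -
  have c0: "0 < real (n choose t)" using t by simp
  have nn: "0 < real n" using n by simp
  let ?c = "real (n choose t) / (3 * real n)"
  have "prob_Gnnp n p (\<lambda>E. n choose t < 3 * n * card (MM n E t))
      \<le> prob_Gnnp n p (\<lambda>E. ?c \<le> real (card (MM n E t)))"
  proof (rule prob_mono[OF p])
    fix E assume "n choose t < 3 * n * card (MM n E t)"
    then have "real (n choose t) < real (3 * n * card (MM n E t))" by (simp only: of_nat_less_iff)
    then show "?c \<le> real (card (MM n E t))" using nn by (simp add: field_simps)
  qed
  also have "\<dots> \<le> (\<Sum>E\<in>Pow (UU n). WW n p E * real (card (MM n E t))) / ?c"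
    by (rule markov[OF p]) (use c0 nn in auto)
  also have "\<dots> \<le> (real (n choose t) / real n ^ 3) / ?c"
    by (rule divide_right_mono[OF EM_large[OF p n t pt]]) (use c0 nn in auto)
  also have "\<dots> = 3 / real n ^ 2" using c0 nn by (simp add: field_simps power_def)
  finally show ?thesis .
qed

lemma bad_large_union:
  fixes p :: real
  assumes p: "0 \<le> p" "p \<le> 1" and n: "1 \<le> n"
    and pt: "\<And>t. m \<le> t \<Longrightarrow> t \<le> n \<Longrightarrow> 12 * ln (real n) \<le> p * real t"
  shows "prob_Gnnp n p (\<lambda>E. \<exists>t\<in>{m..n}. n choose t < 3 * n * card (MM n E t)) \<le> 3 * (real n + 1) / real n ^ 2"
proof -
  have "prob_Gnnp n p (\<lambda>E. \<exists>t\<in>{m..n}. n choose t < 3 * n * card (MM n E t))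
      \<le> (\<Sum>t\<in>{m..n}. prob_Gnnp n p (\<lambda>E. n choose t < 3 * n * card (MM n E t)))"
    by (rule prob_union) (use p in auto)
  also have "\<dots> \<le> (\<Sum>t\<in>{m..n}. 3 / real n ^ 2)"
    by (rule sum_mono) (use bad_large[OF p n _ pt] in auto)
  also have "\<dots> = real (card {m..n}) * (3 / real n ^ 2)" by simp
  also have "\<dots> \<le> (real n + 1) * (3 / real n ^ 2)"
    by (intro mult_right_mono) auto
  finally show ?thesis by (simp add: algebra_simps)
qed



lemma good_event:
  assumes m: "1 \<le> m" and G: "\<not> (\<exists>t\<in>{m..n}. n choose t < 3 * n * card (MM n E t))"
  shows "log_concave_on (indep_count n E) m n"
    and "m \<le> n div 2 \<Longrightarrow> unimodal_half (indep_count n E) m n"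
proof -
  have i: "\<And>s. 1 \<le> s \<Longrightarrow> indep_count n E s = 2 * (n choose s) + (card \<circ> MM n E) s"
    by (simp add: indep_count_eq)
  have G': "\<And>s. m \<le> s \<Longrightarrow> s \<le> n \<Longrightarrow> 3 * n * (card \<circ> MM n E) s \<le> n choose s"
    using G by (auto simp: not_less)
  note gl = good_large[OF i m G']
  show "log_concave_on (indep_count n E) m n" by (rule gl(1))
  assume "m \<le> n div 2"
  then show "unimodal_half (indep_count n E) m n"
    by (rule unimodal_crit) (use gl(2,3) in auto)
qed

lemma lim_3n: "(\<lambda>n. 3 * (real n + 1) / real n ^ 2) \<longlonglongrightarrow> 0"
  by real_asymp

lemma bad_to_zero:
  assumes p01: "\<And>n. 0 \<le> p n \<and> p n \<le> 1"
    and ev: "\<forall>\<^sub>F n in sequentially. prob_Gnnp n (p n) (B n) \<le> 3 * (real n + 1) / real n ^ 2"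
  shows "(\<lambda>n. prob_Gnnp n (p n) (B n)) \<longlonglongrightarrow> 0"
proof (rule tendsto_sandwich[OF _ ev tendsto_const lim_3n])
  show "\<forall>\<^sub>F n in sequentially. 0 \<le> prob_Gnnp n (p n) (B n)"
    using prob_nonneg p01 by auto
qed

lemma ev_asymp1: "\<forall>\<^sub>F n in sequentially. 14 * sqrt (ln (real n)) * sqrt (real n) \<le> real n / 2 - 1"
  by real_asymp

lemma ev_ge3: "\<forall>\<^sub>F n in sequentially. (3::nat) \<le> n"
  by (simp add: eventually_ge_at_top)

lemma ln_ge1: "3 \<le> n \<Longrightarrow> 1 \<le> ln (real n)"
proof -
  assume "3 \<le> n"
  have "exp 1 \<le> (3::real)" using exp_le by simp
  also have "\<dots> \<le> real n" using \<open>3 \<le> n\<close> by simp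
  finally show ?thesis using ln_le_cancel_iff[of "exp 1" "real n"] \<open>3 \<le> n\<close> by simp
qed

lemma part2:
  "\<exists>(C::real) (D::real). \<forall>p::nat \<Rightarrow> real. (\<forall>n. 0 \<le> p n \<and> p n \<le> 1) \<longrightarrow>
      (\<forall>\<^sub>F n in sequentially. p n \<ge> D * real n powr (-1/2) * sqrt (ln (real n))) \<longrightarrow>
      almost_surely p (\<lambda>n E.
         unimodal_half (indep_count n E) (nat \<lfloor>C * ln (real n) / p n\<rfloor>) n \<and>
         log_concave_on (indep_count n E) (nat \<lfloor>C * ln (real n) / p n\<rfloor>) n)"
proof (intro exI allI impI)
  fix p :: "nat \<Rightarrow> real"
  assume p01: "\<forall>n. 0 \<le> p n \<and> p n \<le> 1"
    and pl: "\<forall>\<^sub>F n in sequentially. p n \<ge> 1 * real n powr (-1/2) * sqrt (ln (real n))"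
  define m where "m n = nat \<lfloor>14 * ln (real n) / p n\<rfloor>" for n
  define B where "B n E = (\<exists>t\<in>{m n..n}. n choose t < 3 * n * card (MM n E t))" for n E
  have props: "\<forall>\<^sub>F n in sequentially. 1 \<le> m n \<and> m n \<le> n div 2 \<and>
      (\<forall>t. m n \<le> t \<longrightarrow> t \<le> n \<longrightarrow> 12 * ln (real n) \<le> p n * real t)"
    using pl ev_asymp1 ev_ge3
  proof eventually_elim
    case (elim n)
    have l1: "1 \<le> ln (real n)" using ln_ge1 elim(3) by simp
    have sq: "0 < sqrt (ln (real n))" using l1 by simp
    have npos: "0 < real n" using elim(3) by simp
    have pp: "0 < p n" using elim(1) sq npos by (smt (verit) mult_pos_pos powr_gt_zero)
    have p1: "p n \<le> 1" using p01 by simp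
    have x_ge: "14 * ln (real n) / p n \<ge> 14"
    proof -
      have "14 * ln (real n) * p n \<le> 14 * ln (real n)" using p1 l1 by (simp add: mult_left_le)
      then have "14 * ln (real n) \<le> 14 * ln (real n) / p n" using pp by (simp add: le_divide_eq)
      then show ?thesis using l1 by linarith
    qed
    have fl: "real (m n) \<le> 14 * ln (real n) / p n" using x_ge by (simp add: m_def)
    have fl2: "14 * ln (real n) / p n - 1 \<le> real (m n)"
      using x_ge by (simp add: m_def)
    have "1 \<le> m n" using x_ge by (simp add: m_def) linarith
    moreover have "m n \<le> n div 2"
    proof -
      have "14 * ln (real n) / p n \<le> 14 * sqrt (ln (real n)) * sqrt (real n)"
      proof -
        have pnn: "p n \<ge> sqrt (ln (real n)) / sqrt (real n)"
        proof -
          have "real n powr (-1/2) = real n powr (- (1/2))" by simp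
          also have "\<dots> = 1 / real n powr (1/2)" by (simp only: powr_minus_divide)
          also have "\<dots> = 1 / sqrt (real n)" using npos by (simp add: powr_half_sqrt)
          finally have "real n powr (-1/2) = 1 / sqrt (real n)" .
          then show ?thesis using elim(1) by simp
        qed
        have "14 * ln (real n) / p n \<le> 14 * ln (real n) / (sqrt (ln (real n)) / sqrt (real n))"
        proof (rule divide_left_mono[OF pnn])
          show "0 \<le> 14 * ln (real n)" using l1 by simp
          have ss: "0 < sqrt (ln (real n)) / sqrt (real n)" using sq npos by simp
          then show "0 < p n * (sqrt (ln (real n)) / sqrt (real n))" using mult_pos_pos[OF pp ss] by simp
        qed
        also have "\<dots> = 14 * sqrt (ln (real n)) * sqrt (real n)"
          using sq l1 by (simp add: field_simps)
        finally show ?thesis .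
      qed
      then have "real (m n) \<le> real n / 2 - 1" using fl elim(2) by linarith
      then show ?thesis by linarith
    qed
    moreover have "\<forall>t. m n \<le> t \<longrightarrow> t \<le> n \<longrightarrow> 12 * ln (real n) \<le> p n * real t"
    proof (intro allI impI)
      fix t assume "m n \<le> t"
      then have "14 * ln (real n) / p n - 1 \<le> real t" using fl2 by linarith
      then have "p n * (14 * ln (real n) / p n - 1) \<le> p n * real t" using pp by (intro mult_left_mono) auto
      moreover have "p n * (14 * ln (real n) / p n - 1) = 14 * ln (real n) - p n"
        using pp by (simp add: right_diff_distrib)
      ultimately show "12 * ln (real n) \<le> p n * real t" using p1 l1 by linarith
    qed
    ultimately show ?case by blast
  qed
  show "almost_surely p (\<lambda>n E.
         unimodal_half (indep_count n E) (nat \<lfloor>14 * ln (real n) / p n\<rfloor>) n \<and>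
         log_concave_on (indep_count n E) (nat \<lfloor>14 * ln (real n) / p n\<rfloor>) n)"
  proof (rule as_from_bad[where B = B])
    show "\<And>n. 0 \<le> p n \<and> p n \<le> 1" using p01 by simp
    show "(\<lambda>n. prob_Gnnp n (p n) (B n)) \<longlonglongrightarrow> 0"
    proof (rule bad_to_zero)
      show "\<And>n. 0 \<le> p n \<and> p n \<le> 1" using p01 by simp
      show "\<forall>\<^sub>F n in sequentially. prob_Gnnp n (p n) (B n) \<le> 3 * (real n + 1) / real n ^ 2"
        using props ev_ge3
      proof eventually_elim
        case (elim n)
        show ?case unfolding B_def
          by (rule bad_large_union) (use elim p01 in auto)
      qed
    qed
    show "\<forall>\<^sub>F n in sequentially. \<forall>E. E \<subseteq> UU n \<longrightarrow> \<not> B n E \<longrightarrow>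
        unimodal_half (indep_count n E) (nat \<lfloor>14 * ln (real n) / p n\<rfloor>) n \<and>
        log_concave_on (indep_count n E) (nat \<lfloor>14 * ln (real n) / p n\<rfloor>) n"
      using props
    proof eventually_elim
      case (elim n)
      show ?case
      proof (intro allI impI)
        fix E assume "\<not> B n E"
        then have nb: "\<not> (\<exists>t\<in>{m n..n}. n choose t < 3 * n * card (MM n E t))" by (simp add: B_def)
        show "unimodal_half (indep_count n E) (nat \<lfloor>14 * ln (real n) / p n\<rfloor>) n \<and>
          log_concave_on (indep_count n E) (nat \<lfloor>14 * ln (real n) / p n\<rfloor>) n"
          using good_event[OF _ nb] elim by (simp add: m_def)
      qed
    qed
  qed
qed



lemma fact_binom_le: "fact k * (m choose k) \<le> m ^ k"
proof (induction k)
  case 0 then show ?case by simp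
next
  case (Suc k)
  have "fact (Suc k) * (m choose Suc k) = fact k * (Suc k * (m choose Suc k))" by (simp add: algebra_simps)
  also have "\<dots> = (m - k) * (fact k * (m choose k))" using binom_step[of k m] by (simp add: mult_ac)
  also have "\<dots> \<le> m * m ^ k" using Suc by (intro mult_mono) auto
  finally show ?case by simp
qed

lemma fact_binom_ge: "k \<le> n \<Longrightarrow> (n + 1 - k) ^ k \<le> fact k * (n choose k)"
proof (induction k)
  case 0 then show ?case by simp
next
  case (Suc k)
  have "(n + 1 - Suc k) ^ Suc k = (n - k) * (n - k) ^ k" using Suc.prems by simp
  also have "\<dots> \<le> (n - k) * (n + 1 - k) ^ k" by (intro mult_left_mono power_mono) auto
  also have "\<dots> \<le> (n - k) * (fact k * (n choose k))" using Suc by (intro mult_left_mono) auto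
  also have "\<dots> = fact k * (Suc k * (n choose Suc k))" using binom_step[of k n] by (simp add: mult_ac)
  also have "\<dots> = fact (Suc k) * (n choose Suc k)" by (simp add: algebra_simps)
  finally show ?case .
qed

lemma indep_le_binom: "indep_count n E t \<le> (2 * n) choose t"
proof -
  have cv: "card (bip_vertices n) = 2 * n"
    unfolding bip_vertices_def by (subst card_Un_disjoint) (auto simp: card_image)
  have fv: "finite (bip_vertices n)" by (simp add: bip_vertices_def)
  have "indep_count n E t \<le> card {S. S \<subseteq> bip_vertices n \<and> card S = t}"
    unfolding indep_count_def
    by (rule card_mono) (use fv in \<open>auto simp: bip_independent_def\<close>)
  also have "\<dots> = (2 * n) choose t" using n_subsets[OF fv, of t] cv by simp
  finally show ?thesis .
qed

lemma indep_ge_binom: "1 \<le> t \<Longrightarrow> 2 * (n choose t) \<le> indep_count n E t"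
  by (simp add: indep_count_eq)

lemma ln2_le: "ln (2::real) \<le> 3/4"
proof -
  have "2 \<le> exp (3/4::real)"
    using exp_lower_Taylor_quadratic[of "3/4"] by (simp add: power2_eq_square)
  then show ?thesis by (metis exp_gt_zero ln_exp ln_le_cancel_iff zero_less_numeral)
qed

lemma two_pow_le:
  assumes "1 \<le> n" "real t \<le> ln (real n)"
  shows "(2::real) ^ t \<le> real n powr (3/4)"
proof -
  have "(2::real) ^ t = exp (real t * ln 2)"
    by (metis exp_ln exp_of_nat_mult zero_less_numeral)
  also have "\<dots> \<le> exp (ln (real n) * (3/4))"
    using assms ln2_le by (intro exp_le_cancel_iff[THEN iffD2] mult_mono) auto
  also have "\<dots> = real n powr (3/4)" using assms by (simp add: powr_def mult.commute)
  finally show ?thesis .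
qed

lemma binom_cmp:
  assumes n1: "1 \<le> n" and tn: "t + 1 \<le> n" and tl: "real t \<le> ln (real n)"
    and big: "(ln (real n) + 1) * real n powr (3/4) + 2 * ln (real n) * (ln (real n) + 1) < 2 * real n"
  shows "(2 * n) choose t < 2 * (n choose (t + 1))"
proof -
  define N where "N = real n"
  define T where "T = real t"
  have N0: "0 < N" using n1 by (simp add: N_def)
  have T0: "0 \<le> T" by (simp add: T_def)
  have TN: "T + 1 \<le> N" using tn by (simp add: N_def T_def)
  have tlN: "T \<le> ln N" using tl by (simp add: N_def T_def)
  have f0: "0 < real (fact (t + 1) :: nat)" by (metis fact_gt_zero of_nat_0_less_iff)
  have up: "real (fact (t+1) :: nat) * real ((2 * n) choose t) \<le> (T + 1) * 2 ^ t * N ^ t"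
  proof -
    have "fact t * ((2 * n) choose t) \<le> (2 * n) ^ t" by (rule fact_binom_le)
    then have "real (fact t * ((2 * n) choose t)) \<le> real ((2 * n) ^ t)" by (simp only: of_nat_le_iff)
    then have h: "real (fact t :: nat) * real ((2 * n) choose t) \<le> 2 ^ t * N ^ t"
      by (simp add: N_def power_mult_distrib)
    have "real (fact (t+1) :: nat) * real ((2 * n) choose t) = (T + 1) * (real (fact t :: nat) * real ((2 * n) choose t))"
      by (simp add: T_def algebra_simps)
    also have "\<dots> \<le> (T + 1) * (2 ^ t * N ^ t)" using h T0 by (intro mult_left_mono) auto
    finally show ?thesis by (simp add: mult_ac)
  qed
  have low: "N ^ t * (N - (T + 1) * T) \<le> real (fact (t+1) :: nat) * real (n choose (t + 1))"
  proof -
    have "(n + 1 - (t+1)) ^ (t+1) \<le> fact (t+1) * (n choose (t+1))" using fact_binom_ge tn by blast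
    then have "real ((n - t) ^ (t+1)) \<le> real (fact (t+1) * (n choose (t+1)))" by (simp only: of_nat_le_iff) simp
    then have h: "(N - T) ^ (t+1) \<le> real (fact (t+1) :: nat) * real (n choose (t + 1))"
      using tn by (simp add: N_def T_def of_nat_diff)
    have b: "1 + real (t+1) * (- T / N) \<le> (1 + (- T / N)) ^ (t+1)"
      using TN N0 by (intro Bernoulli_inequality) (simp add: field_simps)
    have "N ^ t * (N - (T + 1) * T) = N ^ (t+1) * (1 + real (t+1) * (- T / N))"
      using N0 by (simp add: T_def field_simps)
    also have "\<dots> \<le> N ^ (t+1) * (1 + (- T / N)) ^ (t+1)" using b N0 by (intro mult_left_mono) auto
    also have "\<dots> = (N - T) ^ (t+1)"
      using N0 by (simp add: power_mult_distrib[symmetric] field_simps)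
    finally show ?thesis using h by linarith
  qed
  have key: "(T + 1) * 2 ^ t < 2 * (N - (T + 1) * T)"
  proof -
    have "(T + 1) * 2 ^ t \<le> (ln N + 1) * N powr (3/4)"
      using tlN T0 two_pow_le[OF n1 tl] by (intro mult_mono) (auto simp: N_def)
    moreover have "(T + 1) * T \<le> (ln N + 1) * ln N" using tlN T0 by (intro mult_mono) auto
    ultimately show ?thesis using big by (simp add: N_def algebra_simps)
  qed
  have "real (fact (t+1) :: nat) * real ((2 * n) choose t) < N ^ t * (2 * (N - (T + 1) * T))"
  proof -
    have "(T + 1) * 2 ^ t * N ^ t < 2 * (N - (T + 1) * T) * N ^ t"
      using key N0 by (intro mult_strict_right_mono) auto
    then show ?thesis using up by (simp add: mult_ac)
  qed
  also have "\<dots> \<le> real (fact (t+1) :: nat) * (2 * real (n choose (t + 1)))"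
  proof -
    have e1: "N ^ t * (2 * (N - (T + 1) * T)) = 2 * (N ^ t * (N - (T + 1) * T))" by (simp only: mult.left_commute)
    have e2: "real (fact (t+1) :: nat) * (2 * real (n choose (t + 1))) = 2 * (real (fact (t+1) :: nat) * real (n choose (t + 1)))"
      by (simp only: mult.left_commute)
    show ?thesis unfolding e1 e2 using low by linarith
  qed
  finally have "real ((2 * n) choose t) < 2 * real (n choose (t + 1))"
    using f0 by (simp only: mult_less_cancel_left_pos)
  then show ?thesis by linarith
qed

lemma ev_big: "\<forall>\<^sub>F n in sequentially.
    (ln (real n) + 1) * real n powr (3/4) + 2 * ln (real n) * (ln (real n) + 1) < 2 * real n"
  by real_asymp

lemma part3:
  "\<forall>(p::nat \<Rightarrow> real) (w::nat \<Rightarrow> real). (\<forall>n. 0 \<le> p n \<and> p n \<le> 1) \<longrightarrow>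
      filterlim w at_top sequentially \<longrightarrow>
      (\<forall>\<^sub>F n in sequentially. p n \<ge> (ln (real n) + ln (ln (real n)) + w n) / real n) \<longrightarrow>
      almost_surely p (\<lambda>n E. \<forall>t. real (Suc t) \<le> ln (real n) - 2 * ln (ln (real n)) \<longrightarrow>
         indep_count n E t < indep_count n E (Suc t))"
proof (intro allI impI)
  fix p :: "nat \<Rightarrow> real" and w :: "nat \<Rightarrow> real"
  assume p01: "\<forall>n. 0 \<le> p n \<and> p n \<le> 1"
  show "almost_surely p (\<lambda>n E. \<forall>t. real (Suc t) \<le> ln (real n) - 2 * ln (ln (real n)) \<longrightarrow>
         indep_count n E t < indep_count n E (Suc t))"
  proof (rule as_from_bad[where B = "\<lambda>n E. False"])
    show "\<And>n. 0 \<le> p n \<and> p n \<le> 1" using p01 by simp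
    show "(\<lambda>n. prob_Gnnp n (p n) (\<lambda>E. False)) \<longlonglongrightarrow> 0" by (simp add: prob_Gnnp_def)
    show "\<forall>\<^sub>F n in sequentially. \<forall>E. E \<subseteq> UU n \<longrightarrow> \<not> False \<longrightarrow>
        (\<forall>t. real (Suc t) \<le> ln (real n) - 2 * ln (ln (real n)) \<longrightarrow>
         indep_count n E t < indep_count n E (Suc t))"
      using ev_big ev_ge3
    proof eventually_elim
      case (elim n)
      have l1: "1 \<le> ln (real n)" using ln_ge1 elim(2) by simp
      have lnn: "0 \<le> ln (ln (real n))" using l1 by simp
      have lnlt: "ln (real n) < real n" using elim(2) ln_less_self by simp
      show ?case
      proof (intro allI impI)
        fix E t assume tt: "real (Suc t) \<le> ln (real n) - 2 * ln (ln (real n))"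
        have tl: "real t \<le> ln (real n)" using tt lnn by simp
        have tn: "t + 1 \<le> n" using tt lnn lnlt by simp
        have "indep_count n E t \<le> (2 * n) choose t" by (rule indep_le_binom)
        also have "\<dots> < 2 * (n choose (t + 1))"
          by (rule binom_cmp[OF _ tn tl elim(1)]) (use elim(2) in simp)
        also have "\<dots> \<le> indep_count n E (Suc t)" using indep_ge_binom[of "Suc t" n E] by simp
        finally show "indep_count n E t < indep_count n E (Suc t)" .
      qed
    qed
  qed
qed



lemma prob_or:
  assumes "0 \<le> p" "p \<le> 1"
  shows "prob_Gnnp n p (\<lambda>E. A E \<or> B E) \<le> prob_Gnnp n p A + prob_Gnnp n p B"
proof -
  have e: "(\<lambda>E. A E \<or> B E) = (\<lambda>E. \<exists>i\<in>{True, False}. (if i then A else B) E)" by auto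
  have "prob_Gnnp n p (\<lambda>E. A E \<or> B E) = prob_Gnnp n p (\<lambda>E. \<exists>i\<in>{True, False}. (if i then A else B) E)"
    by (simp only: e)
  also have "\<dots> \<le> (\<Sum>i\<in>{True, False}. prob_Gnnp n p (if i then A else B))"
    by (rule prob_union) (use assms in auto)
  finally show ?thesis by simp
qed

lemma exp_sq_lower: "0 \<le> (u::real) \<Longrightarrow> u^2 / 2 \<le> exp u"
  using exp_lower_Taylor_quadratic[of u] by simp

lemma Ksmall:
  fixes \<delta> x :: real
  assumes d: "0 < \<delta>" and t: "1 \<le> t" and b: "b \<le> t"
    and x: "0 \<le> x" "x \<le> 2 * real t * exp (- (\<delta> * real t / 2))"
  shows "x ^ b \<le> (2 * (16 / \<delta>^2) + 1) ^ nat \<lceil>16 / \<delta>^2\<rceil>"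
proof -
  define T where "T = 16 / \<delta>^2"
  have T0: "0 < T" using d by (simp add: T_def)
  have K1: "1 \<le> (2 * T + 1) ^ nat \<lceil>T\<rceil>" using T0 by (intro one_le_power) auto
  have ge: "(2 * (16 / \<delta>^2) + 1) ^ nat \<lceil>16 / \<delta>^2\<rceil> = (2 * T + 1) ^ nat \<lceil>T\<rceil>" by (simp only: T_def)
  show ?thesis
  proof (cases "T \<le> real t")
    case True
    have u: "(\<delta> * real t / 2)^2 / 2 \<le> exp (\<delta> * real t / 2)" using d by (intro exp_sq_lower) auto
    have tpos: "0 < real t" using t by simp
    have "2 * real t * exp (- (\<delta> * real t / 2)) = 2 * real t / exp (\<delta> * real t / 2)"
      by (simp only: exp_minus divide_inverse)
    also have "\<dots> \<le> 2 * real t / ((\<delta> * real t / 2)^2 / 2)"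
      using u d tpos by (intro divide_left_mono) auto
    also have "\<dots> = 16 / (\<delta>^2 * real t)" using d tpos by (simp add: field_simps power2_eq_square)
    also have "\<dots> \<le> 1" using True d tpos by (simp add: T_def field_simps)
    finally have "x \<le> 1" using x by linarith
    then have "x ^ b \<le> 1" using x by (simp add: power_le_one)
    then show ?thesis using K1 unfolding ge by linarith
  next
    case False
    have "x \<le> 2 * real t" using x by (smt (verit) exp_le_one_iff mult_left_le d of_nat_0_le_iff
          zero_le_mult_iff divide_nonneg_pos)
    also have "\<dots> \<le> 2 * T + 1" using False by simp
    finally have xx: "x \<le> 2 * T + 1" .
    have "x ^ b \<le> (2 * T + 1) ^ b" using x xx by (intro power_mono) auto
    also have "\<dots> \<le> (2 * T + 1) ^ nat \<lceil>T\<rceil>"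
    proof (rule power_increasing)
      have "real b \<le> T" using b False by simp
      then show "b \<le> nat \<lceil>T\<rceil>" by linarith
    qed (use T0 in auto)
    finally show ?thesis unfolding ge .
  qed
qed

lemma term_small:
  fixes p \<delta> :: real
  assumes d: "0 < \<delta>" "\<delta> \<le> p" "p \<le> 1" and a: "1 \<le> a" "a < t" and tn: "2 * t \<le> n"
  defines "K \<equiv> (2 * (16 / \<delta>^2) + 1) ^ nat \<lceil>16 / \<delta>^2\<rceil>"
  shows "real (n choose a) * real (n choose (t - a)) * (1 - p) ^ (a * (t - a)) \<le> K * real (n choose t)"
proof -
  define b where "b = min a (t - a)"
  have tn': "t \<le> n" using tn by simp
  have q0: "0 \<le> 1 - p" using d by simp
  note tb = term_bound[of "1-p" a t n, folded b_def, OF q0 a tn']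
  define x where "x = 2 * real t * (1 - p) ^ (t - b)"
  have x0: "0 \<le> x" using q0 by (simp add: x_def)
  have xb: "x \<le> 2 * real t * exp (- (\<delta> * real t / 2))"
  proof -
    have "(1 - p) ^ (t - b) \<le> exp (- (p * real (t - b)))" by (rule q_pow_exp) (use d in auto)
    also have "\<dots> \<le> exp (- (\<delta> * real t / 2))"
    proof -
      have "\<delta> * real t \<le> p * real t" using d by (intro mult_right_mono) auto
      also have "\<dots> \<le> p * (2 * real (t - b))" using tb(3) d by (intro mult_left_mono) auto
      finally show ?thesis by simp
    qed
    finally show ?thesis unfolding x_def by (intro mult_left_mono) auto
  qed
  have xK: "x ^ b \<le> K" unfolding K_def
    by (rule Ksmall[OF d(1) _ _ x0 xb]) (use a tb(2) in auto)
  have np: "0 < real (n + 1 - t)" using tn' by simp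
  have nle: "real n * real t * (1 - p) ^ (t - b) \<le> real (n + 1 - t) * x"
  proof -
    have "real n \<le> 2 * real (n + 1 - t)" using tn by (simp add: of_nat_diff)
    then have "real n * (real t * (1 - p) ^ (t - b)) \<le> 2 * real (n + 1 - t) * (real t * (1 - p) ^ (t - b))"
      using q0 by (intro mult_right_mono) auto
    then show ?thesis by (simp add: x_def mult_ac)
  qed
  have T0: "0 \<le> real (n choose a) * real (n choose (t - a)) * (1 - p) ^ (a * (t - a))" using q0 by simp
  have "real (n choose a) * real (n choose (t - a)) * (1 - p) ^ (a * (t - a)) * real (n + 1 - t) ^ b
      \<le> (real n * real t * (1 - p) ^ (t - b)) ^ b * real (n choose t)" by (rule tb(4))
  also have "\<dots> \<le> (real (n + 1 - t) * x) ^ b * real (n choose t)"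
    by (intro mult_right_mono power_mono nle) (use q0 in auto)
  also have "\<dots> \<le> real (n + 1 - t) ^ b * (K * real (n choose t))"
  proof -
    have e: "(real (n + 1 - t) * x) ^ b * real (n choose t) = real (n + 1 - t) ^ b * (x ^ b * real (n choose t))"
      by (simp add: power_mult_distrib mult.assoc)
    have "x ^ b * real (n choose t) \<le> K * real (n choose t)" using xK by (rule mult_right_mono) simp
    then show ?thesis unfolding e by (rule mult_left_mono) simp
  qed
  finally have "real (n + 1 - t) ^ b * (real (n choose a) * real (n choose (t - a)) * (1 - p) ^ (a * (t - a)))
       \<le> real (n + 1 - t) ^ b * (K * real (n choose t))" by (simp add: mult_ac)
  then show ?thesis using np by (simp add: mult_le_cancel_left_pos)
qed

lemma EM_small:
  fixes p \<delta> :: real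
  assumes d: "0 < \<delta>" "\<delta> \<le> p" "p \<le> 1" and tn: "2 * t \<le> n"
  defines "K \<equiv> (2 * (16 / \<delta>^2) + 1) ^ nat \<lceil>16 / \<delta>^2\<rceil>"
  shows "(\<Sum>E\<in>Pow (UU n). WW n p E * real (card (MM n E t))) \<le> real t * K * real (n choose t)"
proof -
  have "(\<Sum>E\<in>Pow (UU n). WW n p E * real (card (MM n E t)))
     = (\<Sum>a\<in>{1..<t}. real (n choose a) * real (n choose (t - a)) * (1 - p) ^ (a * (t - a)))"
    by (rule expect_MM_sum)
  also have "\<dots> \<le> (\<Sum>a\<in>{1..<t}. K * real (n choose t))"
    by (rule sum_mono) (use term_small[OF d _ _ tn] in \<open>auto simp: K_def\<close>)
  also have "\<dots> = real (t - 1) * (K * real (n choose t))" by simp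
  also have "\<dots> \<le> real t * (K * real (n choose t))"
  proof (rule mult_right_mono)
    show "0 \<le> K * real (n choose t)" unfolding K_def using d by simp
  qed simp
  finally show ?thesis by (simp add: mult_ac)
qed

lemma bad_small:
  fixes p \<delta> :: real
  assumes d: "0 < \<delta>" "\<delta> \<le> p" "p \<le> 1" and t: "1 \<le> t" and tn: "4 * t + 2 \<le> n"
  defines "K \<equiv> (2 * (16 / \<delta>^2) + 1) ^ nat \<lceil>16 / \<delta>^2\<rceil>"
  shows "prob_Gnnp n p (\<lambda>E. (n - 2 * t - 1) * (n choose t) < Suc t * card (MM n E t))
     \<le> 2 * real t * real (Suc t) * K / real n"
proof -
  have p: "0 \<le> p" "p \<le> 1" using d by auto
  have c0: "0 < real (n choose t)" using tn by simp
  have nn: "0 < real n" using tn by simp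
  have K0: "0 \<le> K" unfolding K_def using d by simp
  define r where "r = real (n - 2 * t - 1)"
  have r: "real n / 2 \<le> r" using tn by (simp add: r_def of_nat_diff)
  have r0: "0 < r" using r nn by linarith
  let ?c = "r * real (n choose t) / real (Suc t)"
  have cpos: "0 < ?c" using r0 c0 by simp
  have "prob_Gnnp n p (\<lambda>E. (n - 2 * t - 1) * (n choose t) < Suc t * card (MM n E t))
      \<le> prob_Gnnp n p (\<lambda>E. ?c \<le> real (card (MM n E t)))"
  proof (rule prob_mono[OF p])
    fix E assume "(n - 2 * t - 1) * (n choose t) < Suc t * card (MM n E t)"
    then have "real ((n - 2 * t - 1) * (n choose t)) < real (Suc t * card (MM n E t))"
      by (simp only: of_nat_less_iff)
    then have "r * real (n choose t) < real (Suc t) * real (card (MM n E t))" by (simp only: r_def of_nat_mult)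
    then have "r * real (n choose t) < real (card (MM n E t)) * real (Suc t)" by (simp only: mult.commute)
    then have "?c < real (card (MM n E t))" by (subst pos_divide_less_eq) auto
    then show "?c \<le> real (card (MM n E t))" by simp
  qed
  also have "\<dots> \<le> (\<Sum>E\<in>Pow (UU n). WW n p E * real (card (MM n E t))) / ?c"
    by (rule markov[OF p cpos]) simp
  also have "\<dots> \<le> (real t * K * real (n choose t)) / ?c"
    by (rule divide_right_mono) (use EM_small[OF d, of t n] tn cpos in \<open>auto simp: K_def\<close>)
  also have "\<dots> = real t * K * real (Suc t) / r" using c0 r0 by (simp add: field_simps)
  also have "\<dots> \<le> real t * K * real (Suc t) / (real n / 2)"
    by (rule divide_left_mono) (use r K0 nn in auto)
  also have "\<dots> = 2 * real t * real (Suc t) * K / real n" by (simp add: field_simps)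
  finally show ?thesis .
qed

lemma bad_small_union:
  fixes p \<delta> :: real
  assumes d: "0 < \<delta>" "\<delta> \<le> p" "p \<le> 1" and mn: "4 * m + 2 \<le> n"
  defines "K \<equiv> (2 * (16 / \<delta>^2) + 1) ^ nat \<lceil>16 / \<delta>^2\<rceil>"
  shows "prob_Gnnp n p (\<lambda>E. \<exists>t\<in>{1..<m}. (n - 2 * t - 1) * (n choose t) < Suc t * card (MM n E t))
     \<le> 2 * K * real m ^ 3 / real n"
proof -
  have p: "0 \<le> p" "p \<le> 1" using d by auto
  have nn: "0 < real n" using mn by simp
  have K0: "0 \<le> K" unfolding K_def using d by simp
  have "prob_Gnnp n p (\<lambda>E. \<exists>t\<in>{1..<m}. (n - 2 * t - 1) * (n choose t) < Suc t * card (MM n E t))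
      \<le> (\<Sum>t\<in>{1..<m}. prob_Gnnp n p (\<lambda>E. (n - 2 * t - 1) * (n choose t) < Suc t * card (MM n E t)))"
    by (rule prob_union) (use p in auto)
  also have "\<dots> \<le> (\<Sum>t\<in>{1..<m}. 2 * K * real m ^ 2 / real n)"
  proof (rule sum_mono)
    fix t assume t: "t \<in> {1..<m}"
    have "prob_Gnnp n p (\<lambda>E. (n - 2 * t - 1) * (n choose t) < Suc t * card (MM n E t))
        \<le> 2 * real t * real (Suc t) * K / real n"
      unfolding K_def by (rule bad_small[OF d]) (use t mn in auto)
    also have "\<dots> \<le> 2 * K * real m ^ 2 / real n"
    proof -
      have "real t * real (Suc t) \<le> real m * real m" using t by (intro mult_mono) auto
      then have "2 * K * (real t * real (Suc t)) \<le> 2 * K * (real m * real m)" using K0 by (intro mult_left_mono) auto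
      then show ?thesis using nn by (intro divide_right_mono) (auto simp: power2_eq_square mult_ac)
    qed
    finally show "prob_Gnnp n p (\<lambda>E. (n - 2 * t - 1) * (n choose t) < Suc t * card (MM n E t))
        \<le> 2 * K * real m ^ 2 / real n" .
  qed
  also have "\<dots> = real (m - 1) * (2 * K * real m ^ 2 / real n)" by simp
  also have "\<dots> \<le> real m * (2 * K * real m ^ 2 / real n)"
    by (rule mult_right_mono) (use K0 nn in auto)
  also have "\<dots> = 2 * K * real m ^ 3 / real n" by (simp add: power_def mult_ac)
  finally show ?thesis .
qed



lemma lim_lncube: "(\<lambda>n. ln (real n) ^ 3 / real n) \<longlonglongrightarrow> 0"
  by real_asymp

lemma lim_lnn: "(\<lambda>n. ln (real n) / real n) \<longlonglongrightarrow> 0"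
  by real_asymp

lemma part1:
  "\<forall>(\<delta>::real) (p::nat \<Rightarrow> real). \<delta> > 0 \<longrightarrow> (\<forall>n. \<delta> \<le> p n \<and> p n \<le> 1) \<longrightarrow>
      almost_surely p (\<lambda>n E. unimodal_half (indep_count n E) 0 n) \<and>
      (\<exists>C::real. almost_surely p
         (\<lambda>n E. log_concave_on (indep_count n E) (nat \<lfloor>C * ln (real n)\<rfloor>) n))"
proof (intro allI impI)
  fix \<delta> :: real and p :: "nat \<Rightarrow> real"
  assume d0: "\<delta> > 0" and dp: "\<forall>n. \<delta> \<le> p n \<and> p n \<le> 1"
  have d1: "\<delta> \<le> 1" using dp by (meson order_trans)
  have p01: "\<And>n. 0 \<le> p n \<and> p n \<le> 1" using dp d0 by (meson less_le_trans less_imp_le)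
  define m where "m n = nat \<lfloor>14 / \<delta> * ln (real n)\<rfloor>" for n
  define K where "K = (2 * (16 / \<delta>^2) + 1) ^ nat \<lceil>16 / \<delta>^2\<rceil>"
  have K0: "0 \<le> K" unfolding K_def using d0 by simp
  have evl: "\<forall>\<^sub>F n in sequentially. ln (real n) / real n < \<delta> / 112"
    using order_tendstoD(2)[OF lim_lnn, of "\<delta>/112"] d0 by simp
  have ev4: "\<forall>\<^sub>F n in sequentially. (4::nat) \<le> n" by (simp add: eventually_ge_at_top)
  have props: "\<forall>\<^sub>F n in sequentially. 3 \<le> n \<and> 1 \<le> m n \<and> 4 * m n + 2 \<le> n \<and>
      real (m n) \<le> 14 / \<delta> * ln (real n) \<and>
      (\<forall>t. m n \<le> t \<longrightarrow> t \<le> n \<longrightarrow> 12 * ln (real n) \<le> p n * real t)"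
    using evl ev4
  proof eventually_elim
    case (elim n)
    have n3: "3 \<le> n" using elim by simp
    have l1: "1 \<le> ln (real n)" using ln_ge1 n3 by simp
    have npos: "0 < real n" using elim by simp
    have x14: "14 \<le> 14 / \<delta> * ln (real n)"
    proof -
      have "14 \<le> 14 / \<delta>" using d0 d1 by (simp add: field_simps)
      also have "\<dots> = 14 / \<delta> * 1" by simp
      also have "\<dots> \<le> 14 / \<delta> * ln (real n)" by (rule mult_left_mono) (use l1 d0 in auto)
      finally show ?thesis .
    qed
    have fl: "real (m n) \<le> 14 / \<delta> * ln (real n)" using x14 by (simp add: m_def)
    have fl2: "14 / \<delta> * ln (real n) - 1 \<le> real (m n)" using x14 by (simp add: m_def)
    have "13 \<le> real (m n)" using fl2 x14 by linarith
    then have "1 \<le> m n" by simp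
    moreover have "4 * m n + 2 \<le> n"
    proof -
      have "ln (real n) < \<delta> / 112 * real n" using elim(1) npos by (simp add: divide_less_eq)
      then have "14 / \<delta> * ln (real n) \<le> 14 / \<delta> * (\<delta> / 112 * real n)" using d0 by (intro mult_left_mono) auto
      also have "\<dots> = real n / 8" using d0 by (simp add: field_simps)
      finally have "real (m n) \<le> real n / 8" using fl by linarith
      then have "real (4 * m n + 2) \<le> real n" using elim(2) by simp
      then show ?thesis by (simp only: of_nat_le_iff)
    qed
    moreover have "\<forall>t. m n \<le> t \<longrightarrow> t \<le> n \<longrightarrow> 12 * ln (real n) \<le> p n * real t"
    proof (intro allI impI)
      fix t assume "m n \<le> t"
      then have "14 / \<delta> * ln (real n) - 1 \<le> real t" using fl2 by linarith
      then have "\<delta> * (14 / \<delta> * ln (real n) - 1) \<le> \<delta> * real t" using d0 by (intro mult_left_mono) auto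
      moreover have "\<delta> * (14 / \<delta> * ln (real n) - 1) = 14 * ln (real n) - \<delta>"
        using d0 by (simp add: right_diff_distrib)
      moreover have "\<delta> * real t \<le> p n * real t" using dp by (intro mult_right_mono) auto
      ultimately show "12 * ln (real n) \<le> p n * real t" using d1 l1 by linarith
    qed
    ultimately show ?case using n3 fl by blast
  qed
  define BL where "BL n E = (\<exists>t\<in>{m n..n}. n choose t < 3 * n * card (MM n E t))" for n E
  define BS where "BS n E = (\<exists>t\<in>{1..<m n}. (n - 2 * t - 1) * (n choose t) < Suc t * card (MM n E t))" for n E
  have BLlim: "(\<lambda>n. prob_Gnnp n (p n) (BL n)) \<longlonglongrightarrow> 0"
  proof (rule bad_to_zero)
    show "\<And>n. 0 \<le> p n \<and> p n \<le> 1" by (rule p01)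
    show "\<forall>\<^sub>F n in sequentially. prob_Gnnp n (p n) (BL n) \<le> 3 * (real n + 1) / real n ^ 2"
      using props
    proof eventually_elim
      case (elim n)
      show ?case unfolding BL_def by (rule bad_large_union) (use elim p01 in auto)
    qed
  qed
  have BSlim: "(\<lambda>n. prob_Gnnp n (p n) (BS n)) \<longlonglongrightarrow> 0"
  proof (rule tendsto_sandwich[of "\<lambda>_. 0" _ _ "\<lambda>n. (2 * K * (14 / \<delta>) ^ 3) * (ln (real n) ^ 3 / real n)"])
    show "\<forall>\<^sub>F n in sequentially. 0 \<le> prob_Gnnp n (p n) (BS n)" using prob_nonneg p01 by auto
    show "\<forall>\<^sub>F n in sequentially. prob_Gnnp n (p n) (BS n) \<le> (2 * K * (14 / \<delta>) ^ 3) * (ln (real n) ^ 3 / real n)"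
      using props
    proof eventually_elim
      case (elim n)
      have "prob_Gnnp n (p n) (BS n) \<le> 2 * K * real (m n) ^ 3 / real n"
        unfolding BS_def K_def by (rule bad_small_union) (use d0 dp elim in auto)
      also have "\<dots> \<le> 2 * K * (14 / \<delta> * ln (real n)) ^ 3 / real n"
        using elim K0 by (intro divide_right_mono mult_left_mono power_mono) auto
      also have "\<dots> = (2 * K * (14 / \<delta>) ^ 3) * (ln (real n) ^ 3 / real n)"
        by (simp only: power_mult_distrib mult.assoc times_divide_eq_right)
      finally show ?case .
    qed
    show "(\<lambda>n. (2 * K * (14 / \<delta>) ^ 3) * (ln (real n) ^ 3 / real n)) \<longlonglongrightarrow> 0"
      using tendsto_mult_right_zero[OF lim_lncube] by simp
  qed simp
  have i: "\<And>n E s. 1 \<le> s \<Longrightarrow> indep_count n E s = 2 * (n choose s) + (card \<circ> MM n E) s"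
    by (simp add: indep_count_eq)
  show "almost_surely p (\<lambda>n E. unimodal_half (indep_count n E) 0 n) \<and>
      (\<exists>C::real. almost_surely p
         (\<lambda>n E. log_concave_on (indep_count n E) (nat \<lfloor>C * ln (real n)\<rfloor>) n))"
  proof
    show "almost_surely p (\<lambda>n E. unimodal_half (indep_count n E) 0 n)"
    proof (rule as_from_bad[where B = "\<lambda>n E. BL n E \<or> BS n E"])
      show "\<And>n. 0 \<le> p n \<and> p n \<le> 1" by (rule p01)
      show "(\<lambda>n. prob_Gnnp n (p n) (\<lambda>E. BL n E \<or> BS n E)) \<longlonglongrightarrow> 0"
      proof (rule tendsto_sandwich[of "\<lambda>_. 0" _ _ "\<lambda>n. prob_Gnnp n (p n) (BL n) + prob_Gnnp n (p n) (BS n)"])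
        show "\<forall>\<^sub>F n in sequentially. 0 \<le> prob_Gnnp n (p n) (\<lambda>E. BL n E \<or> BS n E)"
          using prob_nonneg p01 by auto
        show "\<forall>\<^sub>F n in sequentially. prob_Gnnp n (p n) (\<lambda>E. BL n E \<or> BS n E) \<le>
            prob_Gnnp n (p n) (BL n) + prob_Gnnp n (p n) (BS n)"
          using prob_or p01 by auto
        show "(\<lambda>n. prob_Gnnp n (p n) (BL n) + prob_Gnnp n (p n) (BS n)) \<longlonglongrightarrow> 0"
          using tendsto_add[OF BLlim BSlim] by simp
      qed simp
      show "\<forall>\<^sub>F n in sequentially. \<forall>E. E \<subseteq> UU n \<longrightarrow> \<not> (BL n E \<or> BS n E) \<longrightarrow>
          unimodal_half (indep_count n E) 0 n"
        using props
      proof eventually_elim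
        case (elim n)
        show ?case
        proof (intro allI impI)
          fix E assume nb: "\<not> (BL n E \<or> BS n E)"
          have G': "\<And>s. m n \<le> s \<Longrightarrow> s \<le> n \<Longrightarrow> 3 * n * (card \<circ> MM n E) s \<le> n choose s"
            using nb by (auto simp: BL_def not_less)
          note gl = good_large[OF i elim[THEN conjunct2, THEN conjunct1] G']
          show "unimodal_half (indep_count n E) 0 n"
          proof (rule unimodal_crit)
            fix t assume t: "0 \<le> t" "2 * t + 1 < n"
            show "indep_count n E t \<le> indep_count n E (Suc t)"
            proof (cases "m n \<le> t")
              case True then show ?thesis using gl(2) t by auto
            next
              case False
              show ?thesis
              proof (cases "t = 0")
                case True then show ?thesis using i[of 1 n E] t by (simp add: indep_count_0)
              next
                case tf: False
                have h: "Suc t * (card \<circ> MM n E) t \<le> (n - 2 * t - 1) * (n choose t)"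
                  using nb False tf by (auto simp: BS_def not_less)
                show ?thesis by (rule inc_step[OF i _ _ h]) (use tf t in auto)
              qed
            qed
          next
            fix t assume t: "0 \<le> t" "t < n" "n < 2 * t + 1"
            have "m n \<le> t" using t elim by linarith
            then show "indep_count n E (Suc t) \<le> indep_count n E t" using gl(3) t by auto
          qed simp
        qed
      qed
    qed
    show "\<exists>C::real. almost_surely p
         (\<lambda>n E. log_concave_on (indep_count n E) (nat \<lfloor>C * ln (real n)\<rfloor>) n)"
    proof (intro exI)
      show "almost_surely p (\<lambda>n E. log_concave_on (indep_count n E) (nat \<lfloor>14 / \<delta> * ln (real n)\<rfloor>) n)"
      proof (rule as_from_bad[where B = BL])
        show "\<And>n. 0 \<le> p n \<and> p n \<le> 1" by (rule p01)
        show "(\<lambda>n. prob_Gnnp n (p n) (BL n)) \<longlonglongrightarrow> 0" by (rule BLlim)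
        show "\<forall>\<^sub>F n in sequentially. \<forall>E. E \<subseteq> UU n \<longrightarrow> \<not> BL n E \<longrightarrow>
          log_concave_on (indep_count n E) (nat \<lfloor>14 / \<delta> * ln (real n)\<rfloor>) n"
          using props
        proof eventually_elim
          case (elim n)
          show ?case
          proof (intro allI impI)
            fix E assume "\<not> BL n E"
            then have nb: "\<not> (\<exists>t\<in>{m n..n}. n choose t < 3 * n * card (MM n E t))" by (simp add: BL_def)
            show "log_concave_on (indep_count n E) (nat \<lfloor>14 / \<delta> * ln (real n)\<rfloor>) n"
              using good_event(1)[OF _ nb] elim by (simp add: m_def)
          qed
        qed
      qed
    qed
  qed
qed



theorem mainTheorem1:
  shows
  "(\<forall>(\<delta>::real) (p::nat \<Rightarrow> real). \<delta> > 0 \<longrightarrow> (\<forall>n. \<delta> \<le> p n \<and> p n \<le> 1) \<longrightarrow>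
      almost_surely p (\<lambda>n E. unimodal_half (indep_count n E) 0 n) \<and>
      (\<exists>C::real. almost_surely p
         (\<lambda>n E. log_concave_on (indep_count n E) (nat \<lfloor>C * ln (real n)\<rfloor>) n)))
   \<and>
   (\<exists>(C::real) (D::real). \<forall>p::nat \<Rightarrow> real. (\<forall>n. 0 \<le> p n \<and> p n \<le> 1) \<longrightarrow>
      (\<forall>\<^sub>F n in sequentially. p n \<ge> D * real n powr (-1/2) * sqrt (ln (real n))) \<longrightarrow>
      almost_surely p (\<lambda>n E.
         unimodal_half (indep_count n E) (nat \<lfloor>C * ln (real n) / p n\<rfloor>) n \<and>
         log_concave_on (indep_count n E) (nat \<lfloor>C * ln (real n) / p n\<rfloor>) n))
   \<and>
   (\<forall>(p::nat \<Rightarrow> real) (w::nat \<Rightarrow> real). (\<forall>n. 0 \<le> p n \<and> p n \<le> 1) \<longrightarrow>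
      filterlim w at_top sequentially \<longrightarrow>
      (\<forall>\<^sub>F n in sequentially. p n \<ge> (ln (real n) + ln (ln (real n)) + w n) / real n) \<longrightarrow>
      almost_surely p (\<lambda>n E. \<forall>t. real (Suc t) \<le> ln (real n) - 2 * ln (ln (real n)) \<longrightarrow>
         indep_count n E t < indep_count n E (Suc t)))"
  by (rule conjI[OF part1 conjI[OF part2 part3]])


end
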